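(* Let $L_0$ satisfy the standing assumptions and let $(\gamma(e))$ be as below. For every $A>0$, as $n\to+\infty$: (1) $\displaystyle\sup_{x\in[-A,A]\cap2^{-n}\mathbb Z}\Big|\operatorname{sgn}(x)\frac12\sum_{i=1}^{2^n|x|}\gamma\big(\{\operatorname{sgn}(x)2^{-n}(i-1),\operatorname{sgn}(x)2^{-n}i\}\big)^{-1}-S_0(x)\Big|\to0$ in probability, where $S_0(x)=\int_0^xL_0(r)^{-2}dr$; (2) $\displaystyle\sup_{x\in[-A,A]\cap2^{-n}\mathbb Z}\Big|\operatorname{sgn}(x)2^{-2n+1}\sum_{i=1}^{2^n|x|}\gamma\big(\{\operatorname{sgn}(x)2^{-n}(i-1),\operatorname{sgn}(x)2^{-n}i\}\big)-\int_0^xL_0(r)^2dr\Big|\to0$ in probability. (Empty sums are $0$.)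
   Context: Standing assumptions: $L_0:\mathbb R\to(0,+\infty)$ continuous with $\int_0^{+\infty}L_0^{-2}=\int_{-\infty}^0L_0^{-2}=+\infty$. For each $n$, $(\gamma(\{x-2^{-n},x\}))_{x\in2^{-n}\mathbb Z}$ are independent random variables indexed by the edges of $2^{-n}\mathbb Z$, with $\gamma(\{x-2^{-n},x\})$ Gamma-distributed with shape parameter $2^{n-1}L_0(x-2^{-n})L_0(x)$ and scale parameter $1$. *)

theory Defs
  imports "HOL-Probability.Probability"
begin

definition gamma_density :: "real \<Rightarrow> real \<Rightarrow> real" where
  "gamma_density a x = (if x > 0 then x powr (a - 1) * exp (- x) / Gamma a else 0)"

definition dyadic :: "nat \<Rightarrow> real set" where
  "dyadic n = {real_of_int k / 2 ^ n | k. True}"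

definition dyadic_edges :: "nat \<Rightarrow> real set set" where
  "dyadic_edges n = {{x - 1 / 2 ^ n, x} | x. x \<in> dyadic n}"

definition standing_L0 :: "(real \<Rightarrow> real) \<Rightarrow> bool" where
  "standing_L0 L0 \<longleftrightarrow> continuous_on UNIV L0 \<and> (\<forall>x. L0 x > 0) \<and>
     (\<integral>\<^sup>+ r. indicator {0..} r * ennreal (1 / L0 r ^ 2) \<partial>lborel) = \<infinity> \<and>
     (\<integral>\<^sup>+ r. indicator {..0} r * ennreal (1 / L0 r ^ 2) \<partial>lborel) = \<infinity>"

definition tendsto_in_prob_zero :: "'a measure \<Rightarrow> (nat \<Rightarrow> 'a \<Rightarrow> real) \<Rightarrow> bool" where
  "tendsto_in_prob_zero M Y \<longleftrightarrow>
     (\<forall>\<epsilon>>0. (\<lambda>n. measure M {\<omega> \<in> space M. \<bar>Y n \<omega>\<bar> > \<epsilon>}) \<longlonglongrightarrow> 0)"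

end

theory Submission
  imports Defs
begin

lemma gamma_moment:
  fixes X :: "'a \<Rightarrow> real"
  assumes P: "prob_space M"
    and D: "distributed M lborel X (\<lambda>t. ennreal (gamma_density a t))"
    and a: "a > 0" and ab: "a + b > 0"
  shows "integrable M (\<lambda>\<omega>. if X \<omega> > 0 then X \<omega> powr b else 0)"
    and "(\<integral>\<omega>. (if X \<omega> > 0 then X \<omega> powr b else 0) \<partial>M) = Gamma (a + b) / Gamma a"
proof -
  note Xm[measurable] = distributed_measurable[OF D, simplified]
  have Ga: "Gamma a > 0" using a by simp
  have Gab: "Gamma (a+b) > 0" using ab by simp
  define g where "g x = (if x > 0 then x powr b else 0)" for x :: real
  have gm[measurable]: "g \<in> borel_measurable borel" unfolding g_def by measurable
  have "(\<integral>\<^sup>+\<omega>. ennreal (g (X \<omega>)) \<partial>M) = (\<integral>\<^sup>+x. ennreal (gamma_density a x) * ennreal (g x) \<partial>lborel)"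
    using distributed_nn_integral[OF D, of "\<lambda>x. ennreal (g x)"] by simp
  also have "\<dots> = (\<integral>\<^sup>+x. ennreal (1 / Gamma a) * ennreal (indicator {0..} x * x powr (a + b - 1) / exp x) \<partial>lborel)"
  proof (intro nn_integral_cong)
    fix x :: real
    show "ennreal (gamma_density a x) * ennreal (g x) = ennreal (1 / Gamma a) * ennreal (indicator {0..} x * x powr (a + b - 1) / exp x)"
    proof (cases "x > 0")
      case True
      have "gamma_density a x * g x = 1 / Gamma a * (indicator {0..} x * x powr (a + b - 1) / exp x)"
        using True by (simp add: gamma_density_def g_def powr_add[symmetric] exp_minus field_simps)
      then show ?thesis using True Ga
        by (simp add: ennreal_mult'[symmetric] gamma_density_def g_def)
    next
      case False
      then show ?thesis by (cases "x = 0") (auto simp: gamma_density_def g_def indicator_def)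
    qed
  qed
  also have "\<dots> = ennreal (1 / Gamma a) * (\<integral>\<^sup>+x. ennreal (indicator {0..} x * x powr (a + b - 1) / exp x) \<partial>lborel)"
    by (rule nn_integral_cmult) measurable
  also have "\<dots> = ennreal (1 / Gamma a) * ennreal (Gamma (a + b))"
    using Gamma_conv_nn_integral_real[OF ab] by simp
  also have "\<dots> = ennreal (Gamma (a + b) / Gamma a)"
    using Ga Gab by (simp add: ennreal_mult'[symmetric])
  finally have nn: "(\<integral>\<^sup>+\<omega>. ennreal (g (X \<omega>)) \<partial>M) = ennreal (Gamma (a + b) / Gamma a)" .
  have nonneg: "AE \<omega> in M. 0 \<le> g (X \<omega>)" by (auto simp: g_def)
  show "integrable M (\<lambda>\<omega>. if X \<omega> > 0 then X \<omega> powr b else 0)"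
    using integrableI_nn_integral_finite[OF _ nonneg nn] by (simp add: g_def)
  show "(\<integral>\<omega>. (if X \<omega> > 0 then X \<omega> powr b else 0) \<partial>M) = Gamma (a + b) / Gamma a"
    using integral_eq_nn_integral[OF _ nonneg] nn Ga Gab by (simp add: g_def)
qed

lemma gamma_pos:
  fixes X :: "'a \<Rightarrow> real"
  assumes D: "distributed M lborel X (\<lambda>t. ennreal (gamma_density a t))"
  shows "AE \<omega> in M. X \<omega> > 0"
proof -
  note Xm[measurable] = distributed_measurable[OF D, simplified]
  have "emeasure M (X -` {..0} \<inter> space M) = (\<integral>\<^sup>+x. ennreal (gamma_density a x) * indicator {..0} x \<partial>lborel)"
    using distributed_emeasure[OF D, of "{..0}"] by simp
  also have "\<dots> = (\<integral>\<^sup>+(x::real). 0 \<partial>lborel)"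
    by (intro nn_integral_cong) (simp add: gamma_density_def indicator_def)
  also have "\<dots> = 0" by simp
  finally have "emeasure M {\<omega> \<in> space M. X \<omega> \<le> 0} = 0"
    by (simp add: vimage_def Int_def conj_commute)
  then show ?thesis
    by (intro AE_I'[of "{\<omega> \<in> space M. X \<omega> \<le> 0}"]) (auto simp: null_sets_def)
qed

lemma gamma_lin:
  fixes X :: "'a \<Rightarrow> real"
  assumes P: "prob_space M"
    and D: "distributed M lborel X (\<lambda>t. ennreal (gamma_density a t))"
    and a: "a > 0"
  shows "integrable M (\<lambda>\<omega>. (X \<omega>)\<^sup>2)" "integrable M X"
    "(\<integral>\<omega>. X \<omega> \<partial>M) = a" "(\<integral>\<omega>. (X \<omega>)\<^sup>2 \<partial>M) = a * (a + 1)"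
proof -
  have pos: "AE \<omega> in M. X \<omega> > 0" by (rule gamma_pos[OF D])
  note Xm[measurable] = distributed_measurable[OF D, simplified]
  have e1: "AE \<omega> in M. (if X \<omega> > 0 then X \<omega> powr 1 else 0) = X \<omega>"
    using pos by eventually_elim auto
  have e2: "AE \<omega> in M. (if X \<omega> > 0 then X \<omega> powr 2 else 0) = (X \<omega>)\<^sup>2"
    using pos by eventually_elim (auto simp: powr_realpow)
  have np: "\<And>x::real. x > 0 \<Longrightarrow> x \<notin> \<int>\<^sub>\<le>\<^sub>0" by (auto dest: nonpos_Ints_nonpos)
  have g1: "Gamma (a + 1) = a * Gamma a" using Gamma_plus1[OF np[OF a]] .
  have g2: "Gamma (a + 2) = (a + 1) * a * Gamma a"
    using Gamma_plus1[OF np[of "a+1"]] g1 a by (simp add: add.assoc)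
  have Ga: "Gamma a \<noteq> 0" using a by (simp add: less_imp_neq[symmetric])
  show "integrable M (\<lambda>\<omega>. (X \<omega>)\<^sup>2)"
    using gamma_moment(1)[OF P D a, of 2] a integrable_cong_AE[OF _ _ e2] by simp
  show "integrable M X"
    using gamma_moment(1)[OF P D a, of 1] a integrable_cong_AE[OF _ _ e1] by simp
  show "(\<integral>\<omega>. X \<omega> \<partial>M) = a"
    using gamma_moment(2)[OF P D a, of 1] a integral_cong_AE[OF _ _ e1] g1 Ga by simp
  show "(\<integral>\<omega>. (X \<omega>)\<^sup>2 \<partial>M) = a * (a + 1)"
    using gamma_moment(2)[OF P D a, of 2] a integral_cong_AE[OF _ _ e2] g2 Ga by simp
qed

lemma gamma_inv:
  fixes X :: "'a \<Rightarrow> real"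
  assumes P: "prob_space M"
    and D: "distributed M lborel X (\<lambda>t. ennreal (gamma_density a t))"
    and a: "a > 2"
  shows "integrable M (\<lambda>\<omega>. (1 / X \<omega>)\<^sup>2)" "integrable M (\<lambda>\<omega>. 1 / X \<omega>)"
    "(\<integral>\<omega>. 1 / X \<omega> \<partial>M) = 1 / (a - 1)"
    "(\<integral>\<omega>. (1 / X \<omega>)\<^sup>2 \<partial>M) = 1 / ((a - 1) * (a - 2))"
proof -
  have a0: "a > 0" using a by simp
  have pos: "AE \<omega> in M. X \<omega> > 0" by (rule gamma_pos[OF D])
  note Xm[measurable] = distributed_measurable[OF D, simplified]
  have e1: "AE \<omega> in M. (if X \<omega> > 0 then X \<omega> powr (-1) else 0) = 1 / X \<omega>"
    using pos by eventually_elim (auto simp: powr_minus_divide)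
  have e2: "AE \<omega> in M. (if X \<omega> > 0 then X \<omega> powr (-2) else 0) = (1 / X \<omega>)\<^sup>2"
    using pos by eventually_elim (auto simp: powr_minus_divide powr_realpow power_one_over)
  have np: "\<And>x::real. x > 0 \<Longrightarrow> x \<notin> \<int>\<^sub>\<le>\<^sub>0" by (auto dest: nonpos_Ints_nonpos)
  have g1: "Gamma a = (a - 1) * Gamma (a + - 1)"
    using Gamma_plus1[OF np[of "a - 1"]] a by simp
  have g2: "Gamma (a + - 1) = (a - 2) * Gamma (a + - 2)"
    using Gamma_plus1[OF np[of "a - 2"]] a by simp
  have G1: "Gamma (a - 1) \<noteq> 0" "Gamma (a - 2) \<noteq> 0" "Gamma (a + - 1) \<noteq> 0" "Gamma (a + - 2) \<noteq> 0"
  proof -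
    have p: "a - 1 > 0" "a - 2 > 0" using a by auto
    have "Gamma (a - 1) > 0" "Gamma (a - 2) > 0" using Gamma_real_pos[OF p(1)] Gamma_real_pos[OF p(2)] by auto
    then show "Gamma (a - 1) \<noteq> 0" "Gamma (a - 2) \<noteq> 0" "Gamma (a + - 1) \<noteq> 0" "Gamma (a + - 2) \<noteq> 0" by auto
  qed
  show "integrable M (\<lambda>\<omega>. (1 / X \<omega>)\<^sup>2)"
    using gamma_moment(1)[OF P D a0, of "-2"] a integrable_cong_AE[OF _ _ e2] by simp
  show "integrable M (\<lambda>\<omega>. 1 / X \<omega>)"
    using gamma_moment(1)[OF P D a0, of "-1"] a integrable_cong_AE[OF _ _ e1] by simp
  show "(\<integral>\<omega>. 1 / X \<omega> \<partial>M) = 1 / (a - 1)"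
    using gamma_moment(2)[OF P D a0, of "-1"] a integral_cong_AE[OF _ _ e1] g1 G1 by simp
  show "(\<integral>\<omega>. (1 / X \<omega>)\<^sup>2 \<partial>M) = 1 / ((a - 1) * (a - 2))"
    using gamma_moment(2)[OF P D a0, of "-2"] a integral_cong_AE[OF _ _ e2] g1 g2 G1 by simp
qed

lemma abs_mult_le_sq: "\<bar>(a::real) * b\<bar> \<le> a\<^sup>2 + b\<^sup>2"
proof -
  have "0 \<le> (\<bar>a\<bar> - \<bar>b\<bar>)\<^sup>2" by simp
  then have "2 * (\<bar>a\<bar> * \<bar>b\<bar>) \<le> a\<^sup>2 + b\<^sup>2" by (simp add: power2_diff)
  moreover have "0 \<le> \<bar>a\<bar> * \<bar>b\<bar>" by simp
  moreover have "\<bar>a * b\<bar> = \<bar>a\<bar> * \<bar>b\<bar>" by (simp add: abs_mult)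
  ultimately show ?thesis by linarith
qed

lemma (in prob_space) var_sum_indep:
  fixes X :: "'i \<Rightarrow> 'a \<Rightarrow> real"
  assumes fin: "finite I" and ind: "indep_vars (\<lambda>_. borel) X I"
    and sq: "\<And>i. i \<in> I \<Longrightarrow> integrable M (\<lambda>\<omega>. (X i \<omega>)\<^sup>2)"
  shows "integrable M (\<lambda>\<omega>. (\<Sum>i\<in>I. X i \<omega>)\<^sup>2)"
    and "variance (\<lambda>\<omega>. \<Sum>i\<in>I. X i \<omega>) = (\<Sum>i\<in>I. variance (X i))"
proof -
  have meas[measurable]: "\<And>i. i \<in> I \<Longrightarrow> X i \<in> borel_measurable M"
    using ind by (auto simp: indep_vars_def)
  have int: "\<And>i. i \<in> I \<Longrightarrow> integrable M (X i)"
    using sq meas square_integrable_imp_integrable by blast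
  have prod: "integrable M (\<lambda>\<omega>. X i \<omega> * X j \<omega>)" if "i \<in> I" "j \<in> I" for i j
  proof (rule Bochner_Integration.integrable_bound[where f="\<lambda>\<omega>. (X i \<omega>)\<^sup>2 + (X j \<omega>)\<^sup>2"])
    show "integrable M (\<lambda>\<omega>. (X i \<omega>)\<^sup>2 + (X j \<omega>)\<^sup>2)" using sq that by auto
    show "(\<lambda>\<omega>. X i \<omega> * X j \<omega>) \<in> borel_measurable M" using that by measurable
    show "AE \<omega> in M. norm (X i \<omega> * X j \<omega>) \<le> norm ((X i \<omega>)\<^sup>2 + (X j \<omega>)\<^sup>2)"
      using abs_mult_le_sq by auto
  qed
  have sqsum: "(\<lambda>\<omega>. (\<Sum>i\<in>I. f i \<omega>)\<^sup>2) = (\<lambda>\<omega>. \<Sum>i\<in>I. \<Sum>j\<in>I. f i \<omega> * f j \<omega>)" for f :: "'i \<Rightarrow> 'a \<Rightarrow> real"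
    by (simp add: power2_eq_square sum_product)
  show "integrable M (\<lambda>\<omega>. (\<Sum>i\<in>I. X i \<omega>)\<^sup>2)"
    unfolding sqsum using prod by auto
  define Y where "Y i \<omega> = X i \<omega> - expectation (X i)" for i \<omega>
  have Ym[measurable]: "\<And>i. i \<in> I \<Longrightarrow> Y i \<in> borel_measurable M" unfolding Y_def by measurable
  have Yint: "\<And>i. i \<in> I \<Longrightarrow> integrable M (Y i)" unfolding Y_def using int by auto
  have EY: "\<And>i. i \<in> I \<Longrightarrow> expectation (Y i) = 0" unfolding Y_def using int prob_space by auto
  have Yind: "indep_vars (\<lambda>_. borel) Y I"
    unfolding Y_def using indep_vars_compose2[OF ind, of "\<lambda>i t. t - expectation (X i)" "\<lambda>_. borel"]
    by auto
  have Yprod: "integrable M (\<lambda>\<omega>. Y i \<omega> * Y j \<omega>)" if "i \<in> I" "j \<in> I" for i j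
    unfolding Y_def using prod[OF that] int that
    by (simp add: algebra_simps)
  have cross: "expectation (\<lambda>\<omega>. Y i \<omega> * Y j \<omega>) = (if i = j then variance (X i) else 0)"
    if "i \<in> I" "j \<in> I" for i j
  proof (cases "i = j")
    case True then show ?thesis by (simp add: Y_def power2_eq_square)
  next
    case False
    have "indep_vars (\<lambda>_. borel) Y {i, j}"
      using indep_vars_subset[OF Yind] that by auto
    then have "expectation (\<lambda>\<omega>. \<Prod>l\<in>{i,j}. Y l \<omega>) = (\<Prod>l\<in>{i,j}. expectation (Y l))"
      using indep_vars_lebesgue_integral[of "{i,j}" Y] Yint that by auto
    then show ?thesis using False EY that by simp
  qed
  have ES: "expectation (\<lambda>\<omega>. \<Sum>i\<in>I. X i \<omega>) = (\<Sum>i\<in>I. expectation (X i))"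
    using int by (simp add: integral_sum)
  have "variance (\<lambda>\<omega>. \<Sum>i\<in>I. X i \<omega>) = expectation (\<lambda>\<omega>. (\<Sum>i\<in>I. Y i \<omega>)\<^sup>2)"
    unfolding ES Y_def by (simp add: sum_subtractf)
  also have "\<dots> = expectation (\<lambda>\<omega>. \<Sum>i\<in>I. \<Sum>j\<in>I. Y i \<omega> * Y j \<omega>)"
    unfolding sqsum ..
  also have "\<dots> = (\<Sum>i\<in>I. \<Sum>j\<in>I. expectation (\<lambda>\<omega>. Y i \<omega> * Y j \<omega>))"
    using Yprod by (simp add: integral_sum integrable_sum)
  also have "\<dots> = (\<Sum>i\<in>I. \<Sum>j\<in>I. if i = j then variance (X i) else 0)"
    using cross by (intro sum.cong refl) auto
  also have "\<dots> = (\<Sum>i\<in>I. variance (X i))"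
    using fin by simp
  finally show "variance (\<lambda>\<omega>. \<Sum>i\<in>I. X i \<omega>) = (\<Sum>i\<in>I. variance (X i))" .
qed

lemma psum_mono:
  fixes f :: "nat \<Rightarrow> real"
  assumes "a \<le> b" "\<And>i. a < i \<Longrightarrow> i \<le> b \<Longrightarrow> 0 \<le> f i"
  shows "sum f {1..a} \<le> sum f {1..b}"
  using assms
proof (induction b rule: dec_induct)
  case base then show ?case by simp
next
  case (step n)
  then have "sum f {1..a} \<le> sum f {1..n}" by auto
  moreover have "0 \<le> f (Suc n)" using step by auto
  ultimately show ?case by simp
qed

lemma psum_gap:
  fixes f :: "nat \<Rightarrow> real"
  assumes "a \<le> b" "\<And>i. a < i \<Longrightarrow> i \<le> b \<Longrightarrow> f i \<le> h"
  shows "sum f {1..b} - sum f {1..a} \<le> real (b - a) * h"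
  using assms
proof (induction b rule: dec_induct)
  case base then show ?case by simp
next
  case (step n)
  then have "sum f {1..n} - sum f {1..a} \<le> real (n - a) * h" by auto
  moreover have "f (Suc n) \<le> h" using step by auto
  moreover have "real (Suc n - a) = real (n - a) + 1" using step by auto
  ultimately show ?case by (simp add: algebra_simps)
qed

lemma grid_det:
  fixes z \<mu> :: "nat \<Rightarrow> real" and K s J :: nat and h \<epsilon> :: real
  assumes z: "\<And>i. i \<in> {1..K} \<Longrightarrow> 0 \<le> z i"
    and mu: "\<And>i. i \<in> {1..K} \<Longrightarrow> 0 \<le> \<mu> i \<and> \<mu> i \<le> h"
    and s: "s \<ge> 1" "K \<le> J * s"
    and grid: "\<And>j. j \<le> J + 1 \<Longrightarrow>
        \<bar>sum z {1..min (j * s) K} - sum \<mu> {1..min (j * s) K}\<bar> < \<epsilon> / 2"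
    and sh: "real s * h \<le> \<epsilon> / 2" and hnn: "0 \<le> h"
    and k: "k \<le> K"
  shows "\<bar>sum z {1..k} - sum \<mu> {1..k}\<bar> \<le> \<epsilon>"
proof -
  define j where "j = k div s"
  have js: "j * s \<le> k" unfolding j_def using div_times_less_eq_dividend by simp
  have ks: "k < (j + 1) * s"
  proof -
    have "k mod s < s" using s by simp
    moreover have "k = j * s + k mod s" unfolding j_def by simp
    ultimately show ?thesis by (simp add: algebra_simps)
  qed
  have jJ: "j \<le> J"
  proof -
    have "k div s \<le> (J * s) div s" using k s by (intro div_le_mono) auto
    then show ?thesis using s unfolding j_def by simp
  qed
  define a where "a = min (j * s) K"
  define b where "b = min ((j+1) * s) K"
  have a: "a = j * s" unfolding a_def using js k by simp
  have ab: "a \<le> k" "k \<le> b" "b \<le> K" using js ks k unfolding a b_def by auto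
  have bas: "b - a \<le> s" unfolding b_def a using ks by (auto simp: algebra_simps)
  have ga: "\<bar>sum z {1..a} - sum \<mu> {1..a}\<bar> < \<epsilon> / 2" unfolding a_def by (rule grid) (use jJ in simp)
  have gb: "\<bar>sum z {1..b} - sum \<mu> {1..b}\<bar> < \<epsilon> / 2" unfolding b_def by (rule grid) (use jJ in simp)
  have z1: "sum z {1..a} \<le> sum z {1..k}" by (rule psum_mono) (use ab z in auto)
  have z2: "sum z {1..k} \<le> sum z {1..b}" by (rule psum_mono) (use ab z in auto)
  have m1: "sum \<mu> {1..a} \<le> sum \<mu> {1..k}" by (rule psum_mono) (use ab mu in auto)
  have m2: "sum \<mu> {1..k} \<le> sum \<mu> {1..b}" by (rule psum_mono) (use ab mu in auto)
  have h0: "0 \<le> h" by (rule hnn)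
  have gap: "sum \<mu> {1..b} - sum \<mu> {1..a} \<le> real (b - a) * h"
    by (rule psum_gap) (use ab mu in auto)
  have "real (b - a) * h \<le> real s * h"
  proof (cases "K \<ge> 1")
    case True then show ?thesis using bas h0 by (intro mult_right_mono) auto
  next
    case False then have "b = 0" using ab by auto
    then show ?thesis using s hnn by simp
  qed
  then have gap2: "sum \<mu> {1..b} - sum \<mu> {1..a} \<le> \<epsilon> / 2" using gap sh by linarith
  show ?thesis using ga gb z1 z2 m1 m2 gap2 unfolding abs_le_iff abs_less_iff by linarith
qed

lemma (in prob_space) conc:
  fixes Z :: "nat \<Rightarrow> nat \<Rightarrow> 'a \<Rightarrow> real" and K :: "nat \<Rightarrow> nat" and \<mu> :: "nat \<Rightarrow> nat \<Rightarrow> real"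
    and h v :: "nat \<Rightarrow> real" and C \<epsilon> :: real
  assumes ind: "\<And>n. indep_vars (\<lambda>_. borel) (Z n) {1..K n}"
    and ev: "eventually (\<lambda>n. 0 \<le> h n \<and> (\<forall>i\<in>{1..K n}. integrable M (\<lambda>\<omega>. (Z n i \<omega>)\<^sup>2) \<and>
        expectation (Z n i) = \<mu> n i \<and> 0 \<le> \<mu> n i \<and> \<mu> n i \<le> h n \<and> variance (Z n i) \<le> v n \<and>
        (AE \<omega> in M. 0 \<le> Z n i \<omega>))) sequentially"
    and h0: "h \<longlonglongrightarrow> 0" and v0: "(\<lambda>n. real (K n) * v n) \<longlonglongrightarrow> 0"
    and Cb: "\<And>n. real (K n) * h n \<le> C" and eps: "\<epsilon> > 0"
  shows "(\<lambda>n. prob {\<omega> \<in> space M. \<exists>k\<le>K n. \<epsilon> < \<bar>(\<Sum>i=1..k. Z n i \<omega>) - (\<Sum>i=1..k. \<mu> n i)\<bar>}) \<longlonglongrightarrow> 0"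
proof -
  define J :: nat where "J = nat \<lceil>4 * max C 1 / \<epsilon>\<rceil> + 1"
  have J1: "J \<ge> 1" unfolding J_def by simp
  have "4 * max C 1 / \<epsilon> \<le> real (nat \<lceil>4 * max C 1 / \<epsilon>\<rceil>)" by (rule real_nat_ceiling_ge)
  then have "4 * max C 1 / \<epsilon> \<le> real J" unfolding J_def by simp
  then have "4 * max C 1 \<le> real J * \<epsilon>" using eps by (simp add: divide_le_eq)
  then have CJ: "max C 1 / real J \<le> \<epsilon> / 4" using J1 by (simp add: divide_le_eq field_simps)
  define bnd where "bnd n = real (J + 2) * (real (K n) * v n) / (\<epsilon>/2)\<^sup>2" for n
  have bnd0: "bnd \<longlonglongrightarrow> 0" unfolding bnd_def
    using tendsto_mult[OF tendsto_const[of "real (J+2)"] v0] by (auto intro: tendsto_divide_zero)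
  have ev2: "eventually (\<lambda>n. h n < \<epsilon>/4) sequentially"
    using order_tendstoD(2)[OF h0, of "\<epsilon>/4"] eps by simp
  show ?thesis
  proof (rule tendsto_sandwich[of "\<lambda>_. 0" _ _ bnd])
    show "eventually (\<lambda>n. 0 \<le> prob {\<omega> \<in> space M. \<exists>k\<le>K n. \<epsilon> < \<bar>(\<Sum>i=1..k. Z n i \<omega>) - (\<Sum>i=1..k. \<mu> n i)\<bar>}) sequentially"
      by simp
    show "((\<lambda>_. 0) \<longlonglongrightarrow> 0)" by simp
    show "bnd \<longlonglongrightarrow> 0" by (rule bnd0)
    show "eventually (\<lambda>n. prob {\<omega> \<in> space M. \<exists>k\<le>K n. \<epsilon> < \<bar>(\<Sum>i=1..k. Z n i \<omega>) - (\<Sum>i=1..k. \<mu> n i)\<bar>} \<le> bnd n) sequentially"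
      using ev ev2
    proof eventually_elim
      case (elim n)
      have hn: "0 \<le> h n" and hyp: "\<And>i. i \<in> {1..K n} \<Longrightarrow> integrable M (\<lambda>\<omega>. (Z n i \<omega>)\<^sup>2) \<and>
        expectation (Z n i) = \<mu> n i \<and> 0 \<le> \<mu> n i \<and> \<mu> n i \<le> h n \<and> variance (Z n i) \<le> v n \<and>
        (AE \<omega> in M. 0 \<le> Z n i \<omega>)" and hs: "h n < \<epsilon>/4" using elim by blast+
      have meas[measurable]: "\<And>i. i \<in> {1..K n} \<Longrightarrow> Z n i \<in> borel_measurable M"
        using ind[of n] by (auto simp: indep_vars_def)
      define s where "s = K n div J + 1"
      have s1: "s \<ge> 1" unfolding s_def by simp
      have KJs: "K n \<le> J * s"
      proof -
        have "K n mod J < J" using J1 by simp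
        moreover have "K n = J * (K n div J) + K n mod J" by simp
        moreover have "J * s = J * (K n div J) + J" unfolding s_def by simp
        ultimately show ?thesis by linarith
      qed
      have sh: "real s * h n \<le> \<epsilon> / 2"
      proof -
        have "real s * h n = real (K n div J) * h n + h n" unfolding s_def by (simp add: algebra_simps)
        also have "real (K n div J) * h n \<le> (real (K n) / real J) * h n"
          using hn by (intro mult_right_mono) (simp_all add: of_nat_div_le_of_nat)
        also have "(real (K n) / real J) * h n = real (K n) * h n / real J" by simp
        also have "\<dots> \<le> max C 1 / real J" using Cb[of n] J1
          by (intro divide_right_mono) auto
        finally show ?thesis using CJ hs by linarith
      qed
      have vnn: "0 \<le> real (K n) * v n"
      proof (cases "K n \<ge> 1")
        case True
        then have "variance (Z n 1) \<le> v n" using hyp[of 1] by auto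
        then have "0 \<le> v n" using variance_positive[of "Z n 1"] by linarith
        then show ?thesis by simp
      next
        case False then have "K n = 0" by linarith
        then show ?thesis by simp
      qed
      define g where "g j = min (j * s) (K n)" for j
      define T where "T j \<omega> = (\<Sum>i=1..g j. Z n i \<omega>)" for j \<omega>
      define B where "B j = {\<omega> \<in> space M. \<epsilon> / 2 \<le> \<bar>T j \<omega> - (\<Sum>i=1..g j. \<mu> n i)\<bar>}" for j
      have gK: "g j \<le> K n" for j unfolding g_def by simp
      have Tm[measurable]: "T j \<in> borel_measurable M" for j
        unfolding T_def using gK[of j] by (intro borel_measurable_sum meas) auto
      have Bm: "B j \<in> sets M" for j unfolding B_def by measurable
      have PB: "prob (B j) \<le> real (K n) * v n / (\<epsilon>/2)\<^sup>2" for j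
      proof -
        have sub: "{1..g j} \<subseteq> {1..K n}" using gK[of j] by auto
        have indj: "indep_vars (\<lambda>_. borel) (Z n) {1..g j}"
          by (rule indep_vars_subset[OF ind sub])
        have sqj: "\<And>i. i \<in> {1..g j} \<Longrightarrow> integrable M (\<lambda>\<omega>. (Z n i \<omega>)\<^sup>2)" using hyp sub by auto
        have intj: "\<And>i. i \<in> {1..g j} \<Longrightarrow> integrable M (Z n i)"
          using sqj meas sub square_integrable_imp_integrable by blast
        have T2: "integrable M (\<lambda>\<omega>. (T j \<omega>)\<^sup>2)"
          unfolding T_def by (rule var_sum_indep(1)[OF _ indj sqj]) auto
        have ET: "expectation (T j) = (\<Sum>i=1..g j. \<mu> n i)"
        proof -
          have "expectation (T j) = (\<Sum>i=1..g j. expectation (Z n i))"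
            unfolding T_def by (rule Bochner_Integration.integral_sum) (use intj in auto)
          also have "\<dots> = (\<Sum>i=1..g j. \<mu> n i)"
          proof (intro sum.cong refl)
            fix i assume "i \<in> {1..g j}"
            then have "i \<in> {1..K n}" using sub by blast
            then show "expectation (Z n i) = \<mu> n i" using hyp by blast
          qed
          finally show ?thesis .
        qed
        have VT: "variance (T j) = (\<Sum>i=1..g j. variance (Z n i))"
          unfolding T_def by (rule var_sum_indep(2)[OF _ indj sqj]) auto
        also have "\<dots> \<le> (\<Sum>i=1..g j. v n)" 
        proof (intro sum_mono)
          fix i assume "i \<in> {1..g j}"
          then have "i \<in> {1..K n}" using sub by blast
          then show "variance (Z n i) \<le> v n" using hyp by blast
        qed
        also have "\<dots> = real (g j) * v n" by simp
        also have "\<dots> \<le> real (K n) * v n"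
        proof (cases "K n \<ge> 1")
          case True
          then have "variance (Z n 1) \<le> v n" using hyp[of 1] by auto
        then have "0 \<le> v n" using variance_positive[of "Z n 1"] by linarith
          then show ?thesis using gK[of j] by (intro mult_right_mono) auto
        next
          case False then have "K n = 0" by linarith
          then have "g j = 0" using gK[of j] by simp
          then show ?thesis using \<open>K n = 0\<close> by simp
        qed
        finally have VT': "variance (T j) \<le> real (K n) * v n" .
        have "prob (B j) \<le> variance (T j) / (\<epsilon>/2)\<^sup>2"
          using Chebyshev_inequality[OF Tm T2, of "\<epsilon>/2"] eps unfolding B_def ET by simp
        also have "\<dots> \<le> real (K n) * v n / (\<epsilon>/2)\<^sup>2"
          using VT' by (intro divide_right_mono) auto
        finally show ?thesis .
      qed
      have AEnn: "AE \<omega> in M. \<forall>i\<in>{1..K n}. 0 \<le> Z n i \<omega>"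
        using hyp by (intro AE_finite_allI) auto
      have AEsub: "AE \<omega> in M. \<omega> \<in> {\<omega> \<in> space M. \<exists>k\<le>K n. \<epsilon> < \<bar>(\<Sum>i=1..k. Z n i \<omega>) - (\<Sum>i=1..k. \<mu> n i)\<bar>}
          \<longrightarrow> \<omega> \<in> (\<Union>j\<in>{..J+1}. B j)"
        using AEnn
      proof eventually_elim
        case (elim \<omega>)
        show ?case
        proof (rule impI, rule ccontr)
          assume a1: "\<omega> \<in> {\<omega> \<in> space M. \<exists>k\<le>K n. \<epsilon> < \<bar>(\<Sum>i=1..k. Z n i \<omega>) - (\<Sum>i=1..k. \<mu> n i)\<bar>}"
            and a2: "\<omega> \<notin> (\<Union>j\<in>{..J+1}. B j)"
          from a1 obtain k where k: "k \<le> K n" "\<epsilon> < \<bar>(\<Sum>i=1..k. Z n i \<omega>) - (\<Sum>i=1..k. \<mu> n i)\<bar>"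
            and om: "\<omega> \<in> space M" by auto
          have "\<bar>(\<Sum>i=1..k. Z n i \<omega>) - (\<Sum>i=1..k. \<mu> n i)\<bar> \<le> \<epsilon>"
          proof (rule grid_det[where z="\<lambda>i. Z n i \<omega>" and \<mu>="\<mu> n" and K="K n" and s=s and J=J and h="h n"])
            show "\<And>i. i \<in> {1..K n} \<Longrightarrow> 0 \<le> Z n i \<omega>" using elim by auto
            show "\<And>i. i \<in> {1..K n} \<Longrightarrow> 0 \<le> \<mu> n i \<and> \<mu> n i \<le> h n" using hyp by auto
            show "1 \<le> s" by (rule s1)
            show "K n \<le> J * s" by (rule KJs)
            show "\<bar>(\<Sum>i = 1..min (j * s) (K n). Z n i \<omega>) - sum (\<mu> n) {1..min (j * s) (K n)}\<bar> < \<epsilon> / 2"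
              if "j \<le> J + 1" for j
              using a2 that om unfolding B_def T_def g_def by force
            show "real s * h n \<le> \<epsilon> / 2" by (rule sh)
            show "0 \<le> h n" by (rule hn)
            show "k \<le> K n" by (rule k(1))
          qed
          then show False using k(2) by simp
        qed
      qed
      have "prob {\<omega> \<in> space M. \<exists>k\<le>K n. \<epsilon> < \<bar>(\<Sum>i=1..k. Z n i \<omega>) - (\<Sum>i=1..k. \<mu> n i)\<bar>}
          \<le> prob (\<Union>j\<in>{..J+1}. B j)"
        by (rule finite_measure_mono_AE[OF AEsub]) (use Bm in auto)
      also have "\<dots> \<le> (\<Sum>j\<in>{..J+1}. prob (B j))"
        by (rule measure_UNION_le) (use Bm in auto)
      also have "\<dots> \<le> (\<Sum>j\<in>{..J+1}. real (K n) * v n / (\<epsilon>/2)\<^sup>2)"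
        by (intro sum_mono PB)
      also have "\<dots> = bnd n" unfolding bnd_def by simp
      finally show ?case .
    qed
  qed
qed

lemma telesc:
  fixes G :: "real \<Rightarrow> real"
  shows "G (s * real k / 2^n) - G 0 = (\<Sum>i=1..k. G (s * real i / 2^n) - G (s * (real i - 1) / 2^n))"
proof (induction k)
  case 0 then show ?case by simp
next
  case (Suc k)
  have "(\<Sum>i=1..Suc k. G (s * real i / 2^n) - G (s * (real i - 1) / 2^n))
      = (\<Sum>i=1..k. G (s * real i / 2^n) - G (s * (real i - 1) / 2^n)) + (G (s * real (Suc k) / 2^n) - G (s * real k / 2^n))"
    by simp
  then show ?case using Suc by simp
qed

lemma side_bound:
  fixes G :: "real \<Rightarrow> real" and z \<mu> :: "nat \<Rightarrow> real"
  assumes s: "s \<in> {1, -1}"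
  shows "\<bar>s * (\<Sum>i=1..k. z i) - (G (s * real k / 2^n) - G 0)\<bar>
     \<le> \<bar>(\<Sum>i=1..k. z i) - (\<Sum>i=1..k. \<mu> i)\<bar> + (\<Sum>i=1..k. \<bar>\<mu> i - s * (G (s * real i / 2^n) - G (s * (real i - 1) / 2^n))\<bar>)"
proof -
  define D where "D i = G (s * real i / 2^n) - G (s * (real i - 1) / 2^n)" for i
  have ss: "s * s = 1" using s by auto
  have sa: "\<bar>s\<bar> = 1" using s by auto
  have "s * (\<Sum>i=1..k. z i) - (G (s * real k / 2^n) - G 0) = s * ((\<Sum>i=1..k. z i) - (\<Sum>i=1..k. \<mu> i)) + s * (\<Sum>i=1..k. \<mu> i - s * D i)"
    unfolding telesc[of G s k n] D_def[symmetric]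
    by (simp add: sum_subtractf sum_distrib_left algebra_simps ss mult.assoc[symmetric])
  also have "\<bar>\<dots>\<bar> \<le> \<bar>(\<Sum>i=1..k. z i) - (\<Sum>i=1..k. \<mu> i)\<bar> + \<bar>\<Sum>i=1..k. \<mu> i - s * D i\<bar>"
    using abs_triangle_ineq[of "s * ((\<Sum>i=1..k. z i) - (\<Sum>i=1..k. \<mu> i))" "s * (\<Sum>i=1..k. \<mu> i - s * D i)"]
    by (simp add: abs_mult sa)
  also have "\<bar>\<Sum>i=1..k. \<mu> i - s * D i\<bar> \<le> (\<Sum>i=1..k. \<bar>\<mu> i - s * D i\<bar>)" by (rule sum_abs)
  finally show ?thesis unfolding D_def by simp
qed

lemma dyadic_int: "x \<in> dyadic n \<Longrightarrow> \<exists>k::int. x = real_of_int k / 2^n"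
  unfolding dyadic_def by auto

lemma dyadic_fin: "finite ({-A..A} \<inter> dyadic n)"
proof -
  let ?c = "\<lceil>2^n * A\<rceil>"
  have "{-A..A} \<inter> dyadic n \<subseteq> (\<lambda>k. real_of_int k / 2^n) ` {-?c..?c}"
  proof
    fix x assume x: "x \<in> {-A..A} \<inter> dyadic n"
    then obtain k :: int where k: "x = k / 2^n" using dyadic_int by blast
    have "\<bar>real_of_int k\<bar> \<le> 2^n * A" using x k by (auto simp: field_simps abs_le_iff)
    then have "\<bar>k\<bar> \<le> ?c" by linarith
    then have "k \<in> {-?c..?c}" by (simp add: abs_le_iff)
    then show "x \<in> (\<lambda>k. real_of_int k / 2^n) ` {-?c..?c}" using k by (intro image_eqI)
  qed
  then show ?thesis by (rule finite_subset) auto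
qed

lemma zero_in_S: "A \<ge> 0 \<Longrightarrow> (0::real) \<in> {-A..A} \<inter> dyadic n"
  unfolding dyadic_def by (auto intro: exI[of _ 0])

lemma (in prob_space) assemble:
  fixes Z :: "real \<Rightarrow> nat \<Rightarrow> nat \<Rightarrow> 'a \<Rightarrow> real" and \<mu> :: "real \<Rightarrow> nat \<Rightarrow> nat \<Rightarrow> real"
    and G f :: "real \<Rightarrow> real" and A :: real
  assumes A: "A > 0"
    and Zm: "\<And>s n i. s \<in> {1,-1} \<Longrightarrow> i \<in> {1..nat \<lfloor>2^n*A\<rfloor>} \<Longrightarrow> Z s n i \<in> borel_measurable M"
    and conv: "\<And>s \<epsilon>. s \<in> {1,-1} \<Longrightarrow> \<epsilon> > 0 \<Longrightarrow> (\<lambda>n. prob {\<omega> \<in> space M. \<exists>k\<le>nat \<lfloor>2^n*A\<rfloor>.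
        \<epsilon> < \<bar>(\<Sum>i=1..k. Z s n i \<omega>) - (\<Sum>i=1..k. \<mu> s n i)\<bar>}) \<longlonglongrightarrow> 0"
    and bias: "\<And>\<epsilon>. \<epsilon> > 0 \<Longrightarrow> eventually (\<lambda>n. \<forall>s\<in>{1,-1}. \<forall>k\<le>nat \<lfloor>2^n*A\<rfloor>.
        (\<Sum>i=1..k. \<bar>\<mu> s n i - s * (G (s * real i / 2^n) - G (s * (real i - 1) / 2^n))\<bar>) \<le> \<epsilon>) sequentially"
    and G: "\<And>x. (LBINT r=0..x. f r) = G x - G 0"
  shows "tendsto_in_prob_zero M (\<lambda>n \<omega>. SUP x\<in>{-A..A} \<inter> dyadic n.
      \<bar>sgn x * (\<Sum>i=1..nat \<lfloor>2^n*\<bar>x\<bar>\<rfloor>. Z (sgn x) n i \<omega>) - (LBINT r=0..x. f r)\<bar>)"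
  unfolding tendsto_in_prob_zero_def
proof (intro allI impI)
  fix \<epsilon> :: real assume eps: "\<epsilon> > 0"
  define K where "K n = nat \<lfloor>2^n*A\<rfloor>" for n :: nat
  define Aev where "Aev s n = {\<omega> \<in> space M. \<exists>k\<le>K n.
        \<epsilon>/2 < \<bar>(\<Sum>i=1..k. Z s n i \<omega>) - (\<Sum>i=1..k. \<mu> s n i)\<bar>}" for s n
  define S where "S n = {-A..A} \<inter> dyadic n" for n :: nat
  define g where "g n x \<omega> = \<bar>sgn x * (\<Sum>i=1..nat \<lfloor>2^n*\<bar>x\<bar>\<rfloor>. Z (sgn x) n i \<omega>) - (LBINT r=0..x. f r)\<bar>" for n x \<omega>
  have Am: "Aev s n \<in> sets M" if s: "s \<in> {1,-1}" for s n
  proof -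
    have "Aev s n = (\<Union>k\<in>{..K n}. {\<omega> \<in> space M. \<epsilon>/2 < \<bar>(\<Sum>i=1..k. Z s n i \<omega>) - (\<Sum>i=1..k. \<mu> s n i)\<bar>})"
      unfolding Aev_def by auto
    also have "\<dots> \<in> sets M"
    proof (intro sets.finite_UN)
      fix k assume "k \<in> {..K n}"
      then have [measurable]: "(\<lambda>\<omega>. \<Sum>i=1..k. Z s n i \<omega>) \<in> borel_measurable M"
        using Zm[OF s] unfolding K_def by (intro borel_measurable_sum) auto
      show "{\<omega> \<in> space M. \<epsilon>/2 < \<bar>(\<Sum>i=1..k. Z s n i \<omega>) - (\<Sum>i=1..k. \<mu> s n i)\<bar>} \<in> sets M"
        by measurable
    qed auto
    finally show ?thesis .
  qed
  have conv2: "(\<lambda>n. prob (Aev s n)) \<longlonglongrightarrow> 0" if "s \<in> {1,-1}" for s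
    unfolding Aev_def K_def using conv[OF that, of "\<epsilon>/2"] eps by simp
  have incl: "{\<omega> \<in> space M. \<epsilon> < \<bar>SUP x\<in>S n. g n x \<omega>\<bar>} \<subseteq> Aev 1 n \<union> Aev (-1) n"
    if bn: "\<forall>s\<in>{1,-1}. \<forall>k\<le>K n.
        (\<Sum>i=1..k. \<bar>\<mu> s n i - s * (G (s * real i / 2^n) - G (s * (real i - 1) / 2^n))\<bar>) \<le> \<epsilon>/2" for n
  proof
    fix \<omega> assume "\<omega> \<in> {\<omega> \<in> space M. \<epsilon> < \<bar>SUP x\<in>S n. g n x \<omega>\<bar>}"
    then have om: "\<omega> \<in> space M" and big: "\<epsilon> < \<bar>SUP x\<in>S n. g n x \<omega>\<bar>" by auto
    have finS: "finite (S n)" unfolding S_def by (rule dyadic_fin)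
    have neS: "S n \<noteq> {}" unfolding S_def using zero_in_S[of A n] A by (metis empty_iff less_imp_le)
    have "(SUP x\<in>S n. g n x \<omega>) = Max ((\<lambda>x. g n x \<omega>) ` S n)"
      using finS neS by (simp add: cSup_eq_Max)
    also have "\<dots> \<in> (\<lambda>x. g n x \<omega>) ` S n" using finS neS by (intro Max_in) auto
    finally obtain x where xS: "x \<in> S n" and sx: "(SUP x\<in>S n. g n x \<omega>) = g n x \<omega>" by auto
    have gbig: "\<epsilon> < g n x \<omega>" using big sx by (simp add: g_def)
    obtain k :: int where xk: "x = real_of_int k / 2^n" using xS dyadic_int unfolding S_def by blast
    define j where "j = nat \<bar>k\<bar>"
    have absx: "\<bar>x\<bar> \<le> A" using xS unfolding S_def by auto
    have "\<bar>real_of_int k\<bar> \<le> 2^n * A" using absx xk by (simp add: abs_divide field_simps)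
    then have "\<bar>k\<bar> \<le> \<lfloor>2^n*A\<rfloor>" by linarith
    then have jK: "j \<le> K n" unfolding j_def K_def by simp
    have flo: "nat \<lfloor>2^n*\<bar>x\<bar>\<rfloor> = j" unfolding xk j_def by (simp add: abs_divide flip: of_int_abs)
    have k0: "k \<noteq> 0"
    proof
      assume "k = 0" then have "x = 0" using xk by simp
      then have "g n x \<omega> = 0" unfolding g_def using G[of 0] by simp
      then show False using gbig eps by simp
    qed
    define s where "s = sgn x"
    have s: "s \<in> {1,-1}" unfolding s_def xk using k0 by (auto simp: sgn_if)
    have xs: "x = s * real j / 2^n"
    proof (cases "k > 0")
      case True
      then show ?thesis unfolding s_def xk j_def by (simp add: zero_less_divide_iff)
    next
      case False
      then have "k < 0" using k0 by simp
      then show ?thesis unfolding s_def xk j_def by (simp add: divide_less_0_iff)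
    qed
    have "g n x \<omega> = \<bar>s * (\<Sum>i=1..j. Z s n i \<omega>) - (G (s * real j / 2^n) - G 0)\<bar>"
      unfolding g_def flo G s_def[symmetric] using xs by simp
    also have "\<dots> \<le> \<bar>(\<Sum>i=1..j. Z s n i \<omega>) - (\<Sum>i=1..j. \<mu> s n i)\<bar> +
        (\<Sum>i=1..j. \<bar>\<mu> s n i - s * (G (s * real i / 2^n) - G (s * (real i - 1) / 2^n))\<bar>)"
      by (rule side_bound[OF s])
    also have "(\<Sum>i=1..j. \<bar>\<mu> s n i - s * (G (s * real i / 2^n) - G (s * (real i - 1) / 2^n))\<bar>) \<le> \<epsilon>/2"
      using bn s jK by blast
    finally have "\<epsilon>/2 < \<bar>(\<Sum>i=1..j. Z s n i \<omega>) - (\<Sum>i=1..j. \<mu> s n i)\<bar>" using gbig by linarith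
    then have "\<omega> \<in> Aev s n" unfolding Aev_def using om jK by auto
    then show "\<omega> \<in> Aev 1 n \<union> Aev (-1) n" using s by auto
  qed
  show "(\<lambda>n. prob {\<omega> \<in> space M. \<epsilon> < \<bar>SUP x\<in>{-A..A} \<inter> dyadic n.
      \<bar>sgn x * (\<Sum>i=1..nat \<lfloor>2^n*\<bar>x\<bar>\<rfloor>. Z (sgn x) n i \<omega>) - (LBINT r=0..x. f r)\<bar>\<bar>}) \<longlonglongrightarrow> 0"
  proof (rule tendsto_sandwich[of "\<lambda>_. 0" _ _ "\<lambda>n. prob (Aev 1 n) + prob (Aev (-1) n)"])
    show "eventually (\<lambda>n. 0 \<le> prob {\<omega> \<in> space M. \<epsilon> < \<bar>SUP x\<in>{-A..A} \<inter> dyadic n.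
      \<bar>sgn x * (\<Sum>i=1..nat \<lfloor>2^n*\<bar>x\<bar>\<rfloor>. Z (sgn x) n i \<omega>) - (LBINT r=0..x. f r)\<bar>\<bar>}) sequentially"
      by simp
    show "(\<lambda>_. 0) \<longlonglongrightarrow> 0" by simp
    show "(\<lambda>n. prob (Aev 1 n) + prob (Aev (-1) n)) \<longlonglongrightarrow> 0"
      using tendsto_add[OF conv2[of 1] conv2[of "-1"]] by simp
    show "eventually (\<lambda>n. prob {\<omega> \<in> space M. \<epsilon> < \<bar>SUP x\<in>{-A..A} \<inter> dyadic n.
      \<bar>sgn x * (\<Sum>i=1..nat \<lfloor>2^n*\<bar>x\<bar>\<rfloor>. Z (sgn x) n i \<omega>) - (LBINT r=0..x. f r)\<bar>\<bar>}
        \<le> prob (Aev 1 n) + prob (Aev (-1) n)) sequentially"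
      using bias[of "\<epsilon>/2", OF half_gt_zero[OF eps]]
    proof (elim eventually_mono)
      fix n assume bn: "\<forall>s\<in>{1,-1}. \<forall>k\<le>nat \<lfloor>2^n*A\<rfloor>.
        (\<Sum>i=1..k. \<bar>\<mu> s n i - s * (G (s * real i / 2^n) - G (s * (real i - 1) / 2^n))\<bar>) \<le> \<epsilon>/2"
      have "prob {\<omega> \<in> space M. \<epsilon> < \<bar>SUP x\<in>S n. g n x \<omega>\<bar>} \<le> prob (Aev 1 n \<union> Aev (-1) n)"
        using incl[of n] bn Am[of 1 n] Am[of "-1" n] unfolding K_def by (intro finite_measure_mono) auto
      also have "\<dots> \<le> prob (Aev 1 n) + prob (Aev (-1) n)"
        using Am[of 1 n] Am[of "-1" n] by (intro measure_Un_le) auto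
      finally show "prob {\<omega> \<in> space M. \<epsilon> < \<bar>SUP x\<in>{-A..A} \<inter> dyadic n.
      \<bar>sgn x * (\<Sum>i=1..nat \<lfloor>2^n*\<bar>x\<bar>\<rfloor>. Z (sgn x) n i \<omega>) - (LBINT r=0..x. f r)\<bar>\<bar>}
        \<le> prob (Aev 1 n) + prob (Aev (-1) n)" unfolding S_def g_def .
    qed
  qed
qed

lemma prim:
  fixes f :: "real \<Rightarrow> real"
  assumes cf: "continuous_on UNIV f"
  shows "\<exists>G. (\<forall>x. (G has_real_derivative f x) (at x)) \<and> (\<forall>x. (LBINT r=0..x. f r) = G x - G 0)"
proof -
  have "\<exists>F. \<forall>x :: real. -\<infinity> < ereal x \<longrightarrow> ereal x < \<infinity> \<longrightarrow> (F has_vector_derivative f x) (at x)"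
    by (rule einterval_antiderivative) (use cf in \<open>auto intro: continuous_on_interior\<close>)
  then obtain G where G: "\<And>x. (G has_vector_derivative f x) (at x)" by auto
  have D: "\<And>x. (G has_real_derivative f x) (at x)"
    using G by (simp add: has_real_derivative_iff_has_vector_derivative)
  have "(LBINT r=0..x. f r) = G x - G 0" for x
  proof -
    have "(LBINT r=(ereal 0)..x. f r) = G x - G 0"
      by (rule interval_integral_FTC_finite)
         (auto intro: continuous_on_subset[OF cf] has_vector_derivative_at_within G)
    then show ?thesis by (simp add: zero_ereal_def)
  qed
  then show ?thesis using D by blast
qed

lemma (in prob_space) indep_sets_reindex:
  assumes inj: "inj_on f I" and ind: "indep_sets F (f ` I)"
  shows "indep_sets (\<lambda>i. F (f i)) I"
  unfolding indep_sets_def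
proof (intro conjI ballI allI impI)
  fix i assume "i \<in> I" then show "F (f i) \<subseteq> events" using ind by (auto simp: indep_sets_def)
next
  fix J A assume J: "J \<subseteq> I" "J \<noteq> {}" "finite J" and A: "A \<in> Pi J (\<lambda>i. F (f i))"
  define g where "g = the_inv_into J f"
  have injJ: "inj_on f J" using inj_on_subset[OF inj J(1)] .
  have gf: "\<And>j. j \<in> J \<Longrightarrow> g (f j) = j" unfolding g_def using the_inv_into_f_f[OF injJ] by blast
  have "prob (\<Inter>y\<in>f`J. A (g y)) = (\<Prod>y\<in>f`J. prob (A (g y)))"
  proof -
    have "(\<lambda>y. A (g y)) \<in> Pi (f ` J) F" using A gf by auto
    moreover have H: "\<forall>J'\<subseteq>f ` I. J' \<noteq> {} \<longrightarrow> finite J' \<longrightarrow>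
        (\<forall>A\<in>Pi J' F. prob (\<Inter>j\<in>J'. A j) = (\<Prod>j\<in>J'. prob (A j)))"
      using ind unfolding indep_sets_def by blast
    moreover have "f ` J \<subseteq> f ` I" "f ` J \<noteq> {}" "finite (f ` J)" using J by auto
    ultimately show ?thesis by blast
  qed
  moreover have "(\<Inter>y\<in>f`J. A (g y)) = (\<Inter>j\<in>J. A j)" using gf by auto
  moreover have "(\<Prod>y\<in>f`J. prob (A (g y))) = (\<Prod>j\<in>J. prob (A j))"
    by (simp add: prod.reindex[OF injJ] gf)
  ultimately show "prob (\<Inter>j\<in>J. A j) = (\<Prod>j\<in>J. prob (A j))" by simp
qed

lemma (in prob_space) indep_vars_reindex:
  assumes inj: "inj_on f I" and ind: "indep_vars M' X (f ` I)"
  shows "indep_vars (\<lambda>i. M' (f i)) (\<lambda>i. X (f i)) I"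
  using ind unfolding indep_vars_def
  using indep_sets_reindex[OF inj, of "\<lambda>j. sigma_sets (space M) {X j -` A \<inter> space M |A. A \<in> sets (M' j)}"]
  by auto

lemma mvt_step:
  fixes G f :: "real \<Rightarrow> real"
  assumes D: "\<And>x. (G has_real_derivative f x) (at x)" and s: "s \<in> {1,-1}"
  shows "\<exists>\<xi>. ((s * (real i - 1) / 2^n \<le> \<xi> \<and> \<xi> \<le> s * real i / 2^n) \<or>
              (s * real i / 2^n \<le> \<xi> \<and> \<xi> \<le> s * (real i - 1) / 2^n)) \<and>
       \<bar>\<xi> - s * (real i - 1) / 2^n\<bar> \<le> 1 / 2^n \<and> \<bar>\<xi> - s * real i / 2^n\<bar> \<le> 1 / 2^n \<and>
       s * (G (s * real i / 2^n) - G (s * (real i - 1) / 2^n)) = f \<xi> / 2^n"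
proof (cases "s = 1")
  case True
  have "(real i - 1) / 2^n < real i / 2^n" by (simp add: divide_strict_right_mono)
  from MVT2[OF this D] obtain z where z: "(real i - 1) / 2^n < z" "z < real i / 2^n"
    "G (real i / 2^n) - G ((real i - 1) / 2^n) = (real i / 2^n - (real i - 1) / 2^n) * f z" by blast
  have "real i / 2^n - (real i - 1) / 2^n = 1 / 2^n" by (simp add: diff_divide_distrib)
  then show ?thesis using True z by (intro exI[of _ z]) (auto simp: abs_le_iff)
next
  case False
  then have s1: "s = -1" using s by auto
  have "- real i / 2^n < - (real i - 1) / 2^n" by (intro divide_strict_right_mono) auto
  from MVT2[OF this D] obtain z where z: "- real i / 2^n < z" "z < - (real i - 1) / 2^n"
    "G (- (real i - 1) / 2^n) - G (- real i / 2^n) = (- (real i - 1) / 2^n - - real i / 2^n) * f z" by blast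
  have "- (real i - 1) / 2^n - - real i / 2^n = 1 / 2^n" by (simp add: diff_divide_distrib)
  then show ?thesis using s1 z by (intro exI[of _ z]) (auto simp: abs_le_iff)
qed

lemma bias_prod:
  fixes Lp Lq Lx Bd \<eta> :: real
  assumes "0 < Lp" "Lp \<le> Bd" "0 < Lx" "Lx \<le> Bd" "\<bar>Lp - Lx\<bar> \<le> \<eta>" "\<bar>Lq - Lx\<bar> \<le> \<eta>"
  shows "\<bar>Lp * Lq - Lx * Lx\<bar> \<le> 2 * Bd * \<eta>"
proof -
  have "Lp * Lq - Lx * Lx = Lp * (Lq - Lx) + Lx * (Lp - Lx)" by (simp add: algebra_simps)
  then have "\<bar>Lp * Lq - Lx * Lx\<bar> \<le> Lp * \<bar>Lq - Lx\<bar> + Lx * \<bar>Lp - Lx\<bar>"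
  proof -
    assume eq: "Lp * Lq - Lx * Lx = Lp * (Lq - Lx) + Lx * (Lp - Lx)"
    have "\<bar>Lp * (Lq - Lx) + Lx * (Lp - Lx)\<bar> \<le> \<bar>Lp * (Lq - Lx)\<bar> + \<bar>Lx * (Lp - Lx)\<bar>"
      by (rule abs_triangle_ineq)
    also have "\<dots> = Lp * \<bar>Lq - Lx\<bar> + Lx * \<bar>Lp - Lx\<bar>" using assms by (simp add: abs_mult)
    finally show ?thesis using eq by simp
  qed
  also have "\<dots> \<le> Bd * \<eta> + Bd * \<eta>"
    using assms by (intro add_mono mult_mono) auto
  finally show ?thesis by simp
qed

lemma bias_inv:
  fixes N P R m2 \<beta> :: real
  assumes N: "N > 0" and P: "P \<ge> m2" and R: "R \<ge> m2" and m2: "m2 > 0" and Nm: "N * m2 \<ge> 4"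
    and b: "\<bar>R - P\<bar> \<le> \<beta>"
  shows "\<bar>1 / (N * P - 2) - 1 / (N * R)\<bar> \<le> 2 * (N * \<beta> + 2) / (N * N * (m2 * m2))"
proof -
  have NP: "N * P \<ge> N * m2" using N P by simp
  have NR: "N * R \<ge> N * m2" using N R by simp
  have d1: "N * P - 2 \<ge> N * m2 / 2" using NP Nm by linarith
  have Nm0: "N * m2 > 0" using N m2 by simp
  have d1p: "N * P - 2 > 0" using d1 Nm0 by linarith
  have d2p: "N * R > 0" using NR Nm0 by linarith
  have "1 / (N * P - 2) - 1 / (N * R) = (1 * (N * R) - 1 * (N * P - 2)) / ((N * P - 2) * (N * R))"
    using d1p d2p by (intro diff_frac_eq) auto
  also have "1 * (N * R) - 1 * (N * P - 2) = N * (R - P) + 2" by (simp add: algebra_simps)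
  finally have eq: "1 / (N * P - 2) - 1 / (N * R) = (N * (R - P) + 2) / ((N * P - 2) * (N * R))" .
  have "\<bar>1 / (N * P - 2) - 1 / (N * R)\<bar> = \<bar>N * (R - P) + 2\<bar> / ((N * P - 2) * (N * R))"
    unfolding eq using d1p d2p by (simp add: abs_divide abs_of_pos)
  also have "\<dots> \<le> (N * \<beta> + 2) / ((N * m2 / 2) * (N * m2))"
  proof (rule frac_le)
    have "0 \<le> \<beta>" using b by linarith
    then show "0 \<le> N * \<beta> + 2" using N by simp
    have "\<bar>N * (R - P) + 2\<bar> \<le> \<bar>N * (R - P)\<bar> + \<bar>2\<bar>" by (rule abs_triangle_ineq)
    then have "\<bar>N * (R - P) + 2\<bar> \<le> N * \<bar>R - P\<bar> + 2" using N by (simp add: abs_mult)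
    also have "\<dots> \<le> N * \<beta> + 2" using N b by simp
    finally show "\<bar>N * (R - P) + 2\<bar> \<le> N * \<beta> + 2" .
    show "0 < N * m2 / 2 * (N * m2)" using N m2 by simp
    show "N * m2 / 2 * (N * m2) \<le> (N * P - 2) * (N * R)"
      using d1 NR N m2 d1p by (intro mult_mono) auto
  qed
  also have "\<dots> = 2 * (N * \<beta> + 2) / (N * N * (m2 * m2))" using N m2 by (simp add: field_simps)
  finally show ?thesis .
qed

lemma edge_repr:
  fixes L0 :: "real \<Rightarrow> real"
  assumes s: "s \<in> {1,-1}" and i: "i \<ge> 1"
  shows "\<exists>x. x \<in> dyadic n \<and> {s*(real i - 1)/2^n, s*real i/2^n} = {x - 1/2^n, x} \<and>
     2^n / 2 * L0 (x - 1/2^n) * L0 x = 2^n / 2 * L0 (s*(real i - 1)/2^n) * L0 (s*real i/2^n)"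
proof (cases "s = 1")
  case True
  have d: "real i / 2^n \<in> dyadic n" unfolding dyadic_def by (auto intro!: exI[of _ "int i"])
  have e: "(real i - 1) / 2^n = real i / 2^n - 1/2^n" by (simp add: diff_divide_distrib)
  show ?thesis using True d e by (intro exI[of _ "real i / 2^n"]) simp
next
  case False
  then have s1: "s = -1" using s by auto
  have d: "- (real i - 1) / 2^n \<in> dyadic n" unfolding dyadic_def
    by (auto intro!: exI[of _ "1 - int i"])
  have e: "- real i / 2^n = - (real i - 1) / 2^n - 1/2^n" by (simp add: diff_divide_distrib)
  show ?thesis using s1 d e by (intro exI[of _ "- (real i - 1) / 2^n"]) (auto simp: insert_commute)
qed

lemma edge_inj:
  assumes s: "s \<in> {1,-1}"
  shows "inj_on (\<lambda>i::nat. {s*(real i - 1)/2^n, s*real i/2^n}) I"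
proof (rule inj_onI)
  fix i j :: nat
  assume eq: "{s*(real i - 1)/2^n, s*real i/2^n} = {s*(real j - 1)/2^n, s*real j/2^n}"
  have sne: "s \<noteq> 0" using s by auto
  from eq have "(s*(real i - 1)/2^n = s*(real j - 1)/2^n \<and> s*real i/2^n = s*real j/2^n) \<or>
      (s*(real i - 1)/2^n = s*real j/2^n \<and> s*real i/2^n = s*(real j - 1)/2^n)"
    by (simp add: doubleton_eq_iff)
  then have "(real i - 1 = real j - 1 \<and> real i = real j) \<or> (real i - 1 = real j \<and> real i = real j - 1)"
    using sne by auto
  then show "i = j" by auto
qed

lemma inv2pow_tendsto: "(\<lambda>n. c / (2::real)^n) \<longlonglongrightarrow> 0"
proof -
  have "(\<lambda>n. c * (1/2::real)^n) \<longlonglongrightarrow> c * 0"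
    by (intro tendsto_mult tendsto_const LIMSEQ_realpow_zero) auto
  then show ?thesis by (simp add: power_one_over)
qed

lemma inv2pow_ev: "\<delta> > 0 \<Longrightarrow> eventually (\<lambda>n. c / (2::real)^n < \<delta>) sequentially"
  using order_tendstoD(2)[OF inv2pow_tendsto] by blast

lemma four_pow: "(4::real)^n = 2^n * 2^n"
  by (simp add: power_mult_distrib[symmetric])

lemma arith2:
  fixes N a B :: real
  assumes N: "N \<ge> 1" and a: "0 < a" "a \<le> N / 2 * B"
  shows "2 / (N * N) * a \<le> B / N" and "(2 / (N * N))\<^sup>2 * (a * (a + 1)) \<le> (B\<^sup>2 + 2 * B) / (N * N)"
proof -
  have B: "0 < B" using a N by (smt (verit) divide_nonneg_nonneg mult_nonneg_nonpos)
  have "2 / (N * N) * a \<le> 2 / (N * N) * (N / 2 * B)" using a N by (intro mult_left_mono) auto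
  also have "\<dots> = B / N" using N by (simp add: field_simps)
  finally show "2 / (N * N) * a \<le> B / N" .
  have "a * (a + 1) \<le> (N / 2 * B) * (N / 2 * B + 1)" using a by (intro mult_mono) auto
  then have "(2 / (N * N))\<^sup>2 * (a * (a + 1)) \<le> (2 / (N * N))\<^sup>2 * ((N / 2 * B) * (N / 2 * B + 1))"
    by (intro mult_left_mono) auto
  also have "\<dots> = B\<^sup>2 / (N * N) + 2 * B / (N * N * N)" using N by (simp add: field_simps power2_eq_square)
  also have "B\<^sup>2 / (N * N) + 2 * B / (N * N * N) \<le> B\<^sup>2 / (N * N) + 2 * B / (N * N)"
  proof -
    have "N * N \<le> N * N * N" using N by (simp add: mult_le_cancel_left1 mult_le_cancel_left2)
    then have "2 * B / (N * N * N) \<le> 2 * B / (N * N)" using B N by (intro divide_left_mono) auto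
    then show ?thesis by simp
  qed
  finally show "(2 / (N * N))\<^sup>2 * (a * (a + 1)) \<le> (B\<^sup>2 + 2 * B) / (N * N)" by (simp add: add_divide_distrib)
qed

lemma arith1:
  fixes N a m2 :: real
  assumes N: "N > 0" and m2: "m2 > 0" and a: "a \<ge> N / 2 * m2" "a > 4"
  shows "1 / 2 * (1 / (a - 1)) \<le> 2 / m2 / N" and "(1 / 2)\<^sup>2 * (1 / ((a - 1) * (a - 2))) \<le> 4 / m2\<^sup>2 / (N * N)"
proof -
  have Nm: "N * m2 > 0" using N m2 by simp
  have "1 / 2 * (1 / (a - 1)) = 1 / (2 * (a - 1))" by simp
  also have "\<dots> \<le> 1 / a" using a by (intro divide_left_mono) auto
  also have "\<dots> \<le> 1 / (N / 2 * m2)" using a Nm by (intro divide_left_mono) auto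
  also have "\<dots> = 2 / m2 / N" using N m2 by (simp add: field_simps)
  finally show "1 / 2 * (1 / (a - 1)) \<le> 2 / m2 / N" .
  have p: "(a / 2) * (a / 2) \<le> (a - 1) * (a - 2)" using a by (intro mult_mono) auto
  have "(1 / 2)\<^sup>2 * (1 / ((a - 1) * (a - 2))) \<le> (1 / 2)\<^sup>2 * (1 / ((a / 2) * (a / 2)))"
    using a p by (intro mult_left_mono divide_left_mono) auto
  also have "\<dots> = 1 / (a * a)" by (simp add: power2_eq_square)
  also have "\<dots> \<le> 1 / ((N / 2 * m2) * (N / 2 * m2))" using a Nm by (intro divide_left_mono mult_mono) auto
  also have "\<dots> = 4 / m2\<^sup>2 / (N * N)" using N m2 by (simp add: field_simps power2_eq_square)
  finally show "(1 / 2)\<^sup>2 * (1 / ((a - 1) * (a - 2))) \<le> 4 / m2\<^sup>2 / (N * N)" .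
qed

locale dyad_model = prob_space M for M :: "'a measure" +
  fixes L0 :: "real \<Rightarrow> real" and \<gamma> :: "nat \<Rightarrow> real set \<Rightarrow> 'a \<Rightarrow> real" and A :: real
  assumes cont: "continuous_on UNIV L0" and pos: "\<And>x. L0 x > 0"
    and indep: "\<And>n. indep_vars (\<lambda>_. borel) (\<gamma> n) (dyadic_edges n)"
    and distr: "\<And>n x. x \<in> dyadic n \<Longrightarrow> distributed M lborel (\<gamma> n {x - 1 / 2 ^ n, x})
         (\<lambda>t. ennreal (gamma_density (2 ^ n / 2 * L0 (x - 1 / 2 ^ n) * L0 x) t))"
    and Apos: "A > 0"
begin

definition K :: "nat \<Rightarrow> nat" where "K n = nat \<lfloor>2^n*A\<rfloor>"
definition E :: "nat \<Rightarrow> real \<Rightarrow> nat \<Rightarrow> real set" where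
  "E n s i = {s * (real i - 1) / 2 ^ n, s * real i / 2 ^ n}"
definition a :: "nat \<Rightarrow> real \<Rightarrow> nat \<Rightarrow> real" where
  "a n s i = 2 ^ n / 2 * L0 (s * (real i - 1) / 2 ^ n) * L0 (s * real i / 2 ^ n)"

lemma a_pos: "a n s i > 0" unfolding a_def using pos by simp

lemma Edist:
  assumes s: "s \<in> {1,-1}" and i: "i \<ge> 1"
  shows "distributed M lborel (\<gamma> n (E n s i)) (\<lambda>t. ennreal (gamma_density (a n s i) t))"
proof -
  obtain x where x: "x \<in> dyadic n" "{s*(real i - 1)/2^n, s*real i/2^n} = {x - 1/2^n, x}"
    "2^n / 2 * L0 (x - 1/2^n) * L0 x = 2^n / 2 * L0 (s*(real i - 1)/2^n) * L0 (s*real i/2^n)"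
    using edge_repr[OF s i, of n L0] by blast
  have e1: "E n s i = {x - 1/2^n, x}" unfolding E_def using x(2) .
  have e2: "a n s i = 2^n/2 * L0 (x - 1/2^n) * L0 x" unfolding a_def using x(3) by simp
  show ?thesis unfolding e1 e2 by (rule distr[OF x(1)])
qed

lemma Eedge:
  assumes s: "s \<in> {1,-1}" and i: "i \<ge> 1"
  shows "E n s i \<in> dyadic_edges n"
proof -
  obtain x where x: "x \<in> dyadic n" "{s*(real i - 1)/2^n, s*real i/2^n} = {x - 1/2^n, x}"
    using edge_repr[OF s i, of n L0] by blast
  then show ?thesis unfolding E_def dyadic_edges_def by auto
qed

lemma ind_gamma:
  assumes s: "s \<in> {1,-1}"
  shows "indep_vars (\<lambda>_. borel) (\<lambda>i. \<gamma> n (E n s i)) {1..K n}"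
proof -
  have inj: "inj_on (E n s) {1..K n}" unfolding E_def by (rule edge_inj[OF s])
  have "E n s ` {1..K n} \<subseteq> dyadic_edges n" using Eedge[OF s] by auto
  then have "indep_vars (\<lambda>_. borel) (\<gamma> n) (E n s ` {1..K n})"
    by (rule indep_vars_subset[OF indep])
  from indep_vars_reindex[OF inj this] show ?thesis by simp
qed

lemma gamma_meas:
  assumes s: "s \<in> {1,-1}" and i: "i \<in> {1..K n}"
  shows "\<gamma> n (E n s i) \<in> borel_measurable M"
  using ind_gamma[OF s, of n] i unfolding indep_vars_def by auto

lemma Kb: "real (K n) \<le> 2^n * A"
proof -
  have "0 \<le> \<lfloor>2^n*A\<rfloor>" using Apos by simp
  then have "real (nat \<lfloor>2^n*A\<rfloor>) = real_of_int \<lfloor>2^n*A\<rfloor>" by simp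
  also have "\<dots> \<le> 2^n*A" by (rule of_int_floor_le)
  finally show ?thesis unfolding K_def .
qed

lemma rng:
  assumes s: "s \<in> {1,-1}" and i: "i \<in> {1..K n}"
  shows "s * (real i - 1) / 2^n \<in> {-A..A} \<and> s * real i / 2^n \<in> {-A..A}"
proof -
  have "real i \<le> 2^n * A" using i Kb[of n] by auto
  then have iA: "real i / 2^n \<le> A" by (simp add: divide_le_eq mult.commute)
  have i1: "real i \<ge> 1" using i by auto
  have "0 \<le> (real i - 1) / 2^n" using i1 by simp
  moreover have "(real i - 1) / 2^n \<le> real i / 2^n" by (simp add: divide_right_mono)
  moreover have "0 \<le> real i / 2^n" by simp
  moreover have "(1 - real i) / 2^n = - ((real i - 1) / 2^n)" by (simp add: minus_divide_left)
  ultimately show ?thesis using s iA by auto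
qed

lemma bounds: "\<exists>m Bd. 0 < m \<and> (\<forall>x\<in>{-A..A}. m \<le> L0 x \<and> L0 x \<le> Bd)"
proof -
  have ne: "{-A..A} \<noteq> {}" using Apos by simp
  have c: "continuous_on {-A..A} L0" using continuous_on_subset[OF cont] by auto
  obtain x1 where x1: "x1 \<in> {-A..A}" "\<forall>y\<in>{-A..A}. L0 x1 \<le> L0 y"
    using continuous_attains_inf[OF compact_Icc ne c] by blast
  obtain x2 where x2: "x2 \<in> {-A..A}" "\<forall>y\<in>{-A..A}. L0 y \<le> L0 x2"
    using continuous_attains_sup[OF compact_Icc ne c] by blast
  show ?thesis using x1 x2 pos by (intro exI[of _ "L0 x1"] exI[of _ "L0 x2"]) auto
qed

lemma a_bounds:
  assumes s: "s \<in> {1,-1}" and i: "i \<in> {1..K n}" and mB: "\<forall>x\<in>{-A..A}. m \<le> L0 x \<and> L0 x \<le> Bd"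
    and m: "0 < m"
  shows "2^n / 2 * (m * m) \<le> a n s i \<and> a n s i \<le> 2^n / 2 * (Bd * Bd)"
proof -
  let ?p = "s * (real i - 1) / 2^n" and ?q = "s * real i / 2^n"
  have r: "?p \<in> {-A..A}" "?q \<in> {-A..A}" using rng[OF s i] by auto
  have "m * m \<le> L0 ?p * L0 ?q" using mB r m pos by (intro mult_mono) (auto intro: less_imp_le)
  moreover have "L0 ?p * L0 ?q \<le> Bd * Bd"
  proof -
    have "L0 ?p \<le> Bd" "L0 ?q \<le> Bd" using mB r by auto
    moreover have "0 < L0 ?p" "0 < L0 ?q" using pos by auto
    ultimately show ?thesis by (intro mult_mono) auto
  qed
  ultimately show ?thesis unfolding a_def by (simp add: mult.assoc)
qed

lemma unif:
  assumes "\<eta> > 0"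
  shows "\<exists>\<delta>>0. \<forall>u\<in>{-A..A}. \<forall>w\<in>{-A..A}. \<bar>u - w\<bar> < \<delta> \<longrightarrow> \<bar>L0 u - L0 w\<bar> < \<eta>"
proof -
  have "uniformly_continuous_on {-A..A} L0"
    by (rule compact_uniformly_continuous) (auto intro: continuous_on_subset[OF cont])
  then show ?thesis using assms unfolding uniformly_continuous_on_def dist_real_def by metis
qed

lemma mvt_rng:
  fixes G f :: "real \<Rightarrow> real"
  assumes D: "\<And>x. (G has_real_derivative f x) (at x)" and s: "s \<in> {1,-1}" and i: "i \<in> {1..K n}"
  shows "\<exists>\<xi>. \<xi> \<in> {-A..A} \<and> \<bar>\<xi> - s * (real i - 1) / 2^n\<bar> \<le> 1 / 2^n \<and> \<bar>\<xi> - s * real i / 2^n\<bar> \<le> 1 / 2^n \<and>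
       s * (G (s * real i / 2^n) - G (s * (real i - 1) / 2^n)) = f \<xi> / 2^n"
proof -
  obtain \<xi> where "((s * (real i - 1) / 2^n \<le> \<xi> \<and> \<xi> \<le> s * real i / 2^n) \<or>
              (s * real i / 2^n \<le> \<xi> \<and> \<xi> \<le> s * (real i - 1) / 2^n)) \<and>
       \<bar>\<xi> - s * (real i - 1) / 2^n\<bar> \<le> 1 / 2^n \<and> \<bar>\<xi> - s * real i / 2^n\<bar> \<le> 1 / 2^n \<and>
       s * (G (s * real i / 2^n) - G (s * (real i - 1) / 2^n)) = f \<xi> / 2^n"
    using mvt_step[OF D s] by blast
  moreover have "s * (real i - 1) / 2^n \<in> {-A..A} \<and> s * real i / 2^n \<in> {-A..A}" by (rule rng[OF s i])
  ultimately show ?thesis by (intro exI[of _ \<xi>]) auto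
qed

lemma mom2:
  assumes s: "s \<in> {1,-1}" and i: "i \<ge> 1" and c: "c \<ge> 0"
  shows "integrable M (\<lambda>\<omega>. (c * \<gamma> n (E n s i) \<omega>)\<^sup>2)"
    and "expectation (\<lambda>\<omega>. c * \<gamma> n (E n s i) \<omega>) = c * a n s i"
    and "variance (\<lambda>\<omega>. c * \<gamma> n (E n s i) \<omega>) \<le> c\<^sup>2 * (a n s i * (a n s i + 1))"
    and "AE \<omega> in M. 0 \<le> c * \<gamma> n (E n s i) \<omega>"
proof -
  note D = Edist[OF s i, of n]
  note gl = gamma_lin[OF prob_space_axioms D a_pos]
  have sq: "(\<lambda>\<omega>. (c * \<gamma> n (E n s i) \<omega>)\<^sup>2) = (\<lambda>\<omega>. c\<^sup>2 * (\<gamma> n (E n s i) \<omega>)\<^sup>2)"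
    by (simp add: power_mult_distrib)
  show i2: "integrable M (\<lambda>\<omega>. (c * \<gamma> n (E n s i) \<omega>)\<^sup>2)" unfolding sq using gl(1) by simp
  have i1: "integrable M (\<lambda>\<omega>. c * \<gamma> n (E n s i) \<omega>)" using gl(2) by simp
  show "expectation (\<lambda>\<omega>. c * \<gamma> n (E n s i) \<omega>) = c * a n s i" using gl(3) by simp
  have e2: "expectation (\<lambda>\<omega>. (c * \<gamma> n (E n s i) \<omega>)\<^sup>2) = c\<^sup>2 * (a n s i * (a n s i + 1))"
    unfolding sq using gl(4) by simp
  show "variance (\<lambda>\<omega>. c * \<gamma> n (E n s i) \<omega>) \<le> c\<^sup>2 * (a n s i * (a n s i + 1))"
    using variance_eq[OF i1 i2] e2 by simp
  show "AE \<omega> in M. 0 \<le> c * \<gamma> n (E n s i) \<omega>"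
    by (rule AE_mp[OF gamma_pos[OF D]]) (use c in \<open>auto intro!: AE_I2\<close>)
qed

lemma mom1:
  assumes s: "s \<in> {1,-1}" and i: "i \<ge> 1" and a2: "a n s i > 2"
  shows "integrable M (\<lambda>\<omega>. (1 / 2 * (1 / \<gamma> n (E n s i) \<omega>))\<^sup>2)"
    and "expectation (\<lambda>\<omega>. 1 / 2 * (1 / \<gamma> n (E n s i) \<omega>)) = 1 / 2 * (1 / (a n s i - 1))"
    and "variance (\<lambda>\<omega>. 1 / 2 * (1 / \<gamma> n (E n s i) \<omega>)) \<le> (1 / 2)\<^sup>2 * (1 / ((a n s i - 1) * (a n s i - 2)))"
    and "AE \<omega> in M. 0 \<le> 1 / 2 * (1 / \<gamma> n (E n s i) \<omega>)"
proof -
  note D = Edist[OF s i, of n]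
  note gl = gamma_inv[OF prob_space_axioms D a2]
  have sq: "(\<lambda>\<omega>. (1 / 2 * (1 / \<gamma> n (E n s i) \<omega>))\<^sup>2) = (\<lambda>\<omega>. (1 / 2)\<^sup>2 * (1 / \<gamma> n (E n s i) \<omega>)\<^sup>2)"
    by (rule ext) (simp only: power_mult_distrib)
  show i2: "integrable M (\<lambda>\<omega>. (1 / 2 * (1 / \<gamma> n (E n s i) \<omega>))\<^sup>2)" unfolding sq using gl(1) by (rule integrable_mult_right)
  have i1: "integrable M (\<lambda>\<omega>. 1 / 2 * (1 / \<gamma> n (E n s i) \<omega>))" using gl(2) by (rule integrable_mult_right)
  show "expectation (\<lambda>\<omega>. 1 / 2 * (1 / \<gamma> n (E n s i) \<omega>)) = 1 / 2 * (1 / (a n s i - 1))" unfolding integral_mult_right_zero gl(3) ..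
  have e2: "expectation (\<lambda>\<omega>. (1 / 2 * (1 / \<gamma> n (E n s i) \<omega>))\<^sup>2) = (1 / 2)\<^sup>2 * (1 / ((a n s i - 1) * (a n s i - 2)))"
    unfolding sq integral_mult_right_zero gl(4) ..
  show "variance (\<lambda>\<omega>. 1 / 2 * (1 / \<gamma> n (E n s i) \<omega>)) \<le> (1 / 2)\<^sup>2 * (1 / ((a n s i - 1) * (a n s i - 2)))"
    using variance_eq[OF i1 i2] e2 by simp
  show "AE \<omega> in M. 0 \<le> 1 / 2 * (1 / \<gamma> n (E n s i) \<omega>)"
    by (rule AE_mp[OF gamma_pos[OF D]]) (auto intro!: AE_I2)
qed

lemma Q2:
  fixes G :: "real \<Rightarrow> real"
  assumes D: "\<And>x. (G has_real_derivative L0 x ^ 2) (at x)"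
    and GI: "\<And>x. (LBINT r=0..x. L0 r ^ 2) = G x - G 0"
  shows "tendsto_in_prob_zero M (\<lambda>n \<omega>. SUP x\<in>{-A..A} \<inter> dyadic n.
      \<bar>sgn x * (\<Sum>i=1..nat \<lfloor>2^n*\<bar>x\<bar>\<rfloor>. 2 / 4^n * \<gamma> n (E n (sgn x) i) \<omega>) - (LBINT r=0..x. L0 r ^ 2)\<bar>)"
proof -
  obtain m Bd where m: "0 < m" and mB: "\<forall>x\<in>{-A..A}. m \<le> L0 x \<and> L0 x \<le> Bd" using bounds by blast
  have Bd0: "0 < Bd" using mB m Apos by (metis atLeastAtMost_iff less_le_trans neg_le_0_iff_le order.strict_implies_order order_trans)
  show ?thesis
  proof (rule assemble[where Z="\<lambda>s n i \<omega>. 2 / 4^n * \<gamma> n (E n s i) \<omega>" and \<mu>="\<lambda>s n i. 2 / 4^n * a n s i"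
        and G=G and f="\<lambda>r. L0 r ^ 2"])
    show "A > 0" by (rule Apos)
    show "(\<lambda>\<omega>. 2 / 4^n * \<gamma> n (E n s i) \<omega>) \<in> borel_measurable M"
      if "s \<in> {1,-1}" "i \<in> {1..nat \<lfloor>2^n*A\<rfloor>}" for s n i
      using gamma_meas[OF that(1), of i n] that(2) unfolding K_def by simp
    show "(LBINT r=0..x. L0 r ^ 2) = G x - G 0" for x by (rule GI)
    show "(\<lambda>n. prob {\<omega> \<in> space M. \<exists>k\<le>nat \<lfloor>2^n*A\<rfloor>.
        \<epsilon> < \<bar>(\<Sum>i=1..k. 2 / 4^n * \<gamma> n (E n s i) \<omega>) - (\<Sum>i=1..k. 2 / 4^n * a n s i)\<bar>}) \<longlonglongrightarrow> 0"
      if s: "s \<in> {1,-1}" and eps: "\<epsilon> > 0" for s \<epsilon>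
    proof -
      have ind2: "indep_vars (\<lambda>_. borel) (\<lambda>i \<omega>. 2 / 4^n * \<gamma> n (E n s i) \<omega>) {1..K n}" for n
        using indep_vars_compose2[OF ind_gamma[OF s], where Y="\<lambda>i t. 2 / 4^n * t" and N="\<lambda>_. borel"] by simp
      have ev: "eventually (\<lambda>n. 0 \<le> Bd * Bd / 2^n \<and> (\<forall>i\<in>{1..K n}.
          integrable M (\<lambda>\<omega>. (2 / 4^n * \<gamma> n (E n s i) \<omega>)\<^sup>2) \<and>
          expectation (\<lambda>\<omega>. 2 / 4^n * \<gamma> n (E n s i) \<omega>) = 2 / 4^n * a n s i \<and>
          0 \<le> 2 / 4^n * a n s i \<and> 2 / 4^n * a n s i \<le> Bd * Bd / 2^n \<and>
          variance (\<lambda>\<omega>. 2 / 4^n * \<gamma> n (E n s i) \<omega>) \<le> ((Bd * Bd)\<^sup>2 + 2 * (Bd * Bd)) / 4^n \<and>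
          (AE \<omega> in M. 0 \<le> 2 / 4^n * \<gamma> n (E n s i) \<omega>))) sequentially"
      proof (intro always_eventually allI)
        fix n
        show "0 \<le> Bd * Bd / 2^n \<and> (\<forall>i\<in>{1..K n}.
          integrable M (\<lambda>\<omega>. (2 / 4^n * \<gamma> n (E n s i) \<omega>)\<^sup>2) \<and>
          expectation (\<lambda>\<omega>. 2 / 4^n * \<gamma> n (E n s i) \<omega>) = 2 / 4^n * a n s i \<and>
          0 \<le> 2 / 4^n * a n s i \<and> 2 / 4^n * a n s i \<le> Bd * Bd / 2^n \<and>
          variance (\<lambda>\<omega>. 2 / 4^n * \<gamma> n (E n s i) \<omega>) \<le> ((Bd * Bd)\<^sup>2 + 2 * (Bd * Bd)) / 4^n \<and>
          (AE \<omega> in M. 0 \<le> 2 / 4^n * \<gamma> n (E n s i) \<omega>))"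
        proof (intro conjI ballI)
        show "0 \<le> Bd * Bd / 2^n" by simp
        fix i assume i: "i \<in> {1..K n}"
        have i1: "i \<ge> 1" using i by auto
        have c: "(2::real) / 4^n \<ge> 0" by simp
        note mm = mom2[OF s i1 c, of n]
        have ab: "a n s i \<le> 2^n / 2 * (Bd * Bd)" using a_bounds[OF s i mB m] by simp
        have N1: "(2::real)^n \<ge> 1" by simp
        note ar = arith2[OF N1 a_pos ab]
        show "integrable M (\<lambda>\<omega>. (2 / 4^n * \<gamma> n (E n s i) \<omega>)\<^sup>2)" by (rule mm(1))
        show "expectation (\<lambda>\<omega>. 2 / 4^n * \<gamma> n (E n s i) \<omega>) = 2 / 4^n * a n s i" by (rule mm(2))
        show "0 \<le> 2 / 4^n * a n s i" using a_pos[of n s i] by simp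
        show "2 / 4^n * a n s i \<le> Bd * Bd / 2^n" using ar(1) by (simp add: four_pow)
        show "variance (\<lambda>\<omega>. 2 / 4^n * \<gamma> n (E n s i) \<omega>) \<le> ((Bd * Bd)\<^sup>2 + 2 * (Bd * Bd)) / 4^n"
          using mm(3) ar(2) by (simp add: four_pow)
        show "AE \<omega> in M. 0 \<le> 2 / 4^n * \<gamma> n (E n s i) \<omega>" by (rule mm(4))
        qed
      qed
      have h0: "(\<lambda>n. Bd * Bd / (2::real)^n) \<longlonglongrightarrow> 0" by (rule inv2pow_tendsto)
      have v0: "(\<lambda>n. real (K n) * (((Bd * Bd)\<^sup>2 + 2 * (Bd * Bd)) / 4^n)) \<longlonglongrightarrow> 0"
      proof (rule tendsto_sandwich[of "\<lambda>_. 0" _ _ "\<lambda>n. A * ((Bd * Bd)\<^sup>2 + 2 * (Bd * Bd)) / 2^n"])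
        show "eventually (\<lambda>n. 0 \<le> real (K n) * (((Bd * Bd)\<^sup>2 + 2 * (Bd * Bd)) / 4^n)) sequentially"
          by (intro always_eventually allI) simp
        show "eventually (\<lambda>n. real (K n) * (((Bd * Bd)\<^sup>2 + 2 * (Bd * Bd)) / 4^n)
            \<le> A * ((Bd * Bd)\<^sup>2 + 2 * (Bd * Bd)) / 2^n) sequentially"
        proof (intro always_eventually allI)
          fix n
          have "real (K n) * (((Bd * Bd)\<^sup>2 + 2 * (Bd * Bd)) / 4^n) \<le> (2^n * A) * (((Bd * Bd)\<^sup>2 + 2 * (Bd * Bd)) / 4^n)"
            using Kb[of n] by (intro mult_right_mono) auto
          also have "\<dots> = A * ((Bd * Bd)\<^sup>2 + 2 * (Bd * Bd)) / 2^n" by (simp add: four_pow)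
          finally show "real (K n) * (((Bd * Bd)\<^sup>2 + 2 * (Bd * Bd)) / 4^n) \<le> A * ((Bd * Bd)\<^sup>2 + 2 * (Bd * Bd)) / 2^n" .
        qed
      qed (auto intro: inv2pow_tendsto)
      have Cb: "real (K n) * (Bd * Bd / 2^n) \<le> A * (Bd * Bd)" for n
      proof -
        have "real (K n) * (Bd * Bd / 2^n) \<le> (2^n * A) * (Bd * Bd / 2^n)"
          using Kb[of n] by (intro mult_right_mono) auto
        then show ?thesis by simp
      qed
      show ?thesis using conc[OF ind2 ev h0 v0 Cb eps] unfolding K_def .
    qed
    show "eventually (\<lambda>n. \<forall>s\<in>{1,-1}. \<forall>k\<le>nat \<lfloor>2^n*A\<rfloor>.
        (\<Sum>i=1..k. \<bar>2 / 4^n * a n s i - s * (G (s * real i / 2^n) - G (s * (real i - 1) / 2^n))\<bar>) \<le> \<epsilon>) sequentially"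
      if eps: "\<epsilon> > 0" for \<epsilon>
    proof -
      define \<eta> where "\<eta> = \<epsilon> / (2 * A * Bd)"
      have \<eta>0: "\<eta> > 0" unfolding \<eta>_def using eps Apos Bd0 by simp
      obtain \<delta> where \<delta>0: "\<delta> > 0" and \<delta>: "\<forall>u\<in>{-A..A}. \<forall>w\<in>{-A..A}. \<bar>u - w\<bar> < \<delta> \<longrightarrow> \<bar>L0 u - L0 w\<bar> < \<eta>"
        using unif[OF \<eta>0] by blast
      show ?thesis using inv2pow_ev[OF \<delta>0, of 1]
      proof eventually_elim
        case (elim n)
        show ?case
        proof (intro ballI allI impI)
          fix s :: real and k :: nat assume s: "s \<in> {1,-1}" and k: "k \<le> nat \<lfloor>2^n*A\<rfloor>"
          have trm: "\<bar>2 / 4^n * a n s i - s * (G (s * real i / 2^n) - G (s * (real i - 1) / 2^n))\<bar> \<le> 2 * Bd * \<eta> / 2^n"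
            if i: "i \<in> {1..k}" for i
          proof -
            have iK: "i \<in> {1..K n}" using i k unfolding K_def by auto
            obtain \<xi> where \<xi>: "\<xi> \<in> {-A..A}" "\<bar>\<xi> - s * (real i - 1) / 2^n\<bar> \<le> 1 / 2^n"
                "\<bar>\<xi> - s * real i / 2^n\<bar> \<le> 1 / 2^n"
                "s * (G (s * real i / 2^n) - G (s * (real i - 1) / 2^n)) = L0 \<xi> ^ 2 / 2^n"
              using mvt_rng[OF D s iK] by blast
            have r: "s * (real i - 1) / 2^n \<in> {-A..A}" "s * real i / 2^n \<in> {-A..A}" using rng[OF s iK] by auto
            have e1: "\<bar>L0 (s * (real i - 1) / 2^n) - L0 \<xi>\<bar> \<le> \<eta>"
              using \<delta> r(1) \<xi>(1,2) elim by (smt (verit, best))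
            have e2: "\<bar>L0 (s * real i / 2^n) - L0 \<xi>\<bar> \<le> \<eta>"
              using \<delta> r(2) \<xi>(1,3) elim by (smt (verit, best))
            have bp: "\<bar>L0 (s * (real i - 1) / 2^n) * L0 (s * real i / 2^n) - L0 \<xi> * L0 \<xi>\<bar> \<le> 2 * Bd * \<eta>"
              by (rule bias_prod) (use pos mB r \<xi>(1) e1 e2 in auto)
            have "2 / 4^n * a n s i - s * (G (s * real i / 2^n) - G (s * (real i - 1) / 2^n))
                = (L0 (s * (real i - 1) / 2^n) * L0 (s * real i / 2^n) - L0 \<xi> * L0 \<xi>) / 2^n"
              unfolding \<xi>(4) a_def four_pow by (simp add: field_simps power2_eq_square)
            then show ?thesis using bp by (simp add: abs_divide divide_right_mono)
          qed
          have "(\<Sum>i=1..k. \<bar>2 / 4^n * a n s i - s * (G (s * real i / 2^n) - G (s * (real i - 1) / 2^n))\<bar>)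
              \<le> (\<Sum>i=1..k. 2 * Bd * \<eta> / 2^n)" by (rule sum_mono) (rule trm)
          also have "\<dots> = real k * (2 * Bd * \<eta> / 2^n)" by simp
          also have "\<dots> \<le> (2^n * A) * (2 * Bd * \<eta> / 2^n)"
          proof (rule mult_right_mono)
            have "real k \<le> real (K n)" using k unfolding K_def by simp
            then show "real k \<le> 2^n * A" using Kb[of n] by linarith
            show "0 \<le> 2 * Bd * \<eta> / 2^n" using Bd0 \<eta>0 by simp
          qed
          also have "\<dots> = \<epsilon>" unfolding \<eta>_def using Apos Bd0 by (simp add: field_simps)
          finally show "(\<Sum>i=1..k. \<bar>2 / 4^n * a n s i - s * (G (s * real i / 2^n) - G (s * (real i - 1) / 2^n))\<bar>) \<le> \<epsilon>" .
        qed
      qed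
    qed
  qed
qed

lemma Q1:
  fixes G :: "real \<Rightarrow> real"
  assumes D: "\<And>x. (G has_real_derivative 1 / L0 x ^ 2) (at x)"
    and GI: "\<And>x. (LBINT r=0..x. 1 / L0 r ^ 2) = G x - G 0"
  shows "tendsto_in_prob_zero M (\<lambda>n \<omega>. SUP x\<in>{-A..A} \<inter> dyadic n.
      \<bar>sgn x * (\<Sum>i=1..nat \<lfloor>2^n*\<bar>x\<bar>\<rfloor>. 1 / 2 * (1 / \<gamma> n (E n (sgn x) i) \<omega>)) - (LBINT r=0..x. 1 / L0 r ^ 2)\<bar>)"
proof -
  obtain m Bd where m: "0 < m" and mB: "\<forall>x\<in>{-A..A}. m \<le> L0 x \<and> L0 x \<le> Bd" using bounds by blast
  have Bd0: "0 < Bd" using mB m Apos by (metis atLeastAtMost_iff less_le_trans neg_le_0_iff_le order.strict_implies_order order_trans)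
  define m2 where "m2 = m * m"
  have m20: "m2 > 0" unfolding m2_def using m by simp
  have big: "a n s i > 4" if s: "s \<in> {1,-1}" and i: "i \<in> {1..K n}" and n: "8 / 2^n < m2" for n s i
  proof -
    have "8 < 2^n * m2" using n by (simp add: divide_less_eq mult.commute)
    then have "4 < 2^n / 2 * m2" by simp
    also have "\<dots> \<le> a n s i" using a_bounds[OF s i mB m] unfolding m2_def by simp
    finally show ?thesis .
  qed
  show ?thesis
  proof (rule assemble[where Z="\<lambda>s n i \<omega>. 1 / 2 * (1 / \<gamma> n (E n s i) \<omega>)" and \<mu>="\<lambda>s n i. 1 / 2 * (1 / (a n s i - 1))"
        and G=G and f="\<lambda>r. 1 / L0 r ^ 2"])
    show "A > 0" by (rule Apos)
    show "(\<lambda>\<omega>. 1 / 2 * (1 / \<gamma> n (E n s i) \<omega>)) \<in> borel_measurable M"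
      if "s \<in> {1,-1}" "i \<in> {1..nat \<lfloor>2^n*A\<rfloor>}" for s n i
      using gamma_meas[OF that(1), of i n] that(2) unfolding K_def by simp
    show "(LBINT r=0..x. 1 / L0 r ^ 2) = G x - G 0" for x by (rule GI)
    show "(\<lambda>n. prob {\<omega> \<in> space M. \<exists>k\<le>nat \<lfloor>2^n*A\<rfloor>.
        \<epsilon> < \<bar>(\<Sum>i=1..k. 1 / 2 * (1 / \<gamma> n (E n s i) \<omega>)) - (\<Sum>i=1..k. 1 / 2 * (1 / (a n s i - 1)))\<bar>}) \<longlonglongrightarrow> 0"
      if s: "s \<in> {1,-1}" and eps: "\<epsilon> > 0" for s \<epsilon>
    proof -
      have ind2: "indep_vars (\<lambda>_. borel) (\<lambda>i \<omega>. 1 / 2 * (1 / \<gamma> n (E n s i) \<omega>)) {1..K n}" for n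
        using indep_vars_compose2[OF ind_gamma[OF s], where Y="\<lambda>i t. 1 / 2 * (1 / t)" and N="\<lambda>_. borel"] by simp
      have ev: "eventually (\<lambda>n. 0 \<le> 2 / m2 / 2^n \<and> (\<forall>i\<in>{1..K n}.
          integrable M (\<lambda>\<omega>. (1 / 2 * (1 / \<gamma> n (E n s i) \<omega>))\<^sup>2) \<and>
          expectation (\<lambda>\<omega>. 1 / 2 * (1 / \<gamma> n (E n s i) \<omega>)) = 1 / 2 * (1 / (a n s i - 1)) \<and>
          0 \<le> 1 / 2 * (1 / (a n s i - 1)) \<and> 1 / 2 * (1 / (a n s i - 1)) \<le> 2 / m2 / 2^n \<and>
          variance (\<lambda>\<omega>. 1 / 2 * (1 / \<gamma> n (E n s i) \<omega>)) \<le> 4 / m2\<^sup>2 / (2^n * 2^n) \<and>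
          (AE \<omega> in M. 0 \<le> 1 / 2 * (1 / \<gamma> n (E n s i) \<omega>)))) sequentially"
        using inv2pow_ev[OF m20, of 8]
      proof eventually_elim
        case (elim n)
        show ?case
        proof (intro conjI ballI)
          show "0 \<le> 2 / m2 / 2^n" using m20 by simp
          fix i assume i: "i \<in> {1..K n}"
          have i1: "i \<ge> 1" using i by auto
          have a4: "a n s i > 4" by (rule big[OF s i elim])
          then have a2: "a n s i > 2" by simp
          note mm = mom1[OF s i1 a2]
          have ab: "2^n / 2 * m2 \<le> a n s i" using a_bounds[OF s i mB m] unfolding m2_def by simp
          have N0: "(2::real)^n > 0" by simp
          note ar = arith1[OF N0 m20 ab a4]
          show "integrable M (\<lambda>\<omega>. (1 / 2 * (1 / \<gamma> n (E n s i) \<omega>))\<^sup>2)" by (rule mm(1))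
          show "expectation (\<lambda>\<omega>. 1 / 2 * (1 / \<gamma> n (E n s i) \<omega>)) = 1 / 2 * (1 / (a n s i - 1))" by (rule mm(2))
          show "0 \<le> 1 / 2 * (1 / (a n s i - 1))" using a2 by simp
          show "1 / 2 * (1 / (a n s i - 1)) \<le> 2 / m2 / 2^n" by (rule ar(1))
          show "variance (\<lambda>\<omega>. 1 / 2 * (1 / \<gamma> n (E n s i) \<omega>)) \<le> 4 / m2\<^sup>2 / (2^n * 2^n)"
            using mm(3) ar(2) by linarith
          show "AE \<omega> in M. 0 \<le> 1 / 2 * (1 / \<gamma> n (E n s i) \<omega>)" by (rule mm(4))
        qed
      qed
      have h0: "(\<lambda>n. 2 / m2 / (2::real)^n) \<longlonglongrightarrow> 0" by (rule inv2pow_tendsto)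
      have v0: "(\<lambda>n. real (K n) * (4 / m2\<^sup>2 / (2^n * 2^n))) \<longlonglongrightarrow> 0"
      proof (rule tendsto_sandwich[of "\<lambda>_. 0" _ _ "\<lambda>n. A * (4 / m2\<^sup>2) / 2^n"])
        show "eventually (\<lambda>n. 0 \<le> real (K n) * (4 / m2\<^sup>2 / (2^n * 2^n))) sequentially"
          by (intro always_eventually allI) simp
        show "eventually (\<lambda>n. real (K n) * (4 / m2\<^sup>2 / (2^n * 2^n)) \<le> A * (4 / m2\<^sup>2) / 2^n) sequentially"
        proof (intro always_eventually allI)
          fix n
          have "real (K n) * (4 / m2\<^sup>2 / (2^n * 2^n)) \<le> (2^n * A) * (4 / m2\<^sup>2 / (2^n * 2^n))"
            using Kb[of n] by (intro mult_right_mono) auto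
          also have "\<dots> = A * (4 / m2\<^sup>2) / 2^n" by simp
          finally show "real (K n) * (4 / m2\<^sup>2 / (2^n * 2^n)) \<le> A * (4 / m2\<^sup>2) / 2^n" .
        qed
      qed (rule tendsto_const, rule inv2pow_tendsto)
      have Cb: "real (K n) * (2 / m2 / 2^n) \<le> A * (2 / m2)" for n
      proof -
        have "real (K n) * (2 / m2 / 2^n) \<le> (2^n * A) * (2 / m2 / 2^n)"
          using Kb[of n] m20 by (intro mult_right_mono) auto
        then show ?thesis by simp
      qed
      show ?thesis using conc[OF ind2 ev h0 v0 Cb eps] unfolding K_def .
    qed
    show "eventually (\<lambda>n. \<forall>s\<in>{1,-1}. \<forall>k\<le>nat \<lfloor>2^n*A\<rfloor>.
        (\<Sum>i=1..k. \<bar>1 / 2 * (1 / (a n s i - 1)) - s * (G (s * real i / 2^n) - G (s * (real i - 1) / 2^n))\<bar>) \<le> \<epsilon>) sequentially"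
      if eps: "\<epsilon> > 0" for \<epsilon>
    proof -
      define \<eta> where "\<eta> = \<epsilon> * m2\<^sup>2 / (8 * A * Bd)"
      have \<eta>0: "\<eta> > 0" unfolding \<eta>_def using eps Apos Bd0 m20 by simp
      obtain \<delta> where \<delta>0: "\<delta> > 0" and \<delta>: "\<forall>u\<in>{-A..A}. \<forall>w\<in>{-A..A}. \<bar>u - w\<bar> < \<delta> \<longrightarrow> \<bar>L0 u - L0 w\<bar> < \<eta>"
        using unif[OF \<eta>0] by blast
      have e2: "\<epsilon> / 2 > 0" using eps by simp
      show ?thesis using inv2pow_ev[OF \<delta>0, of 1] inv2pow_ev[OF m20, of 8] inv2pow_ev[OF e2, of "4 * A / m2\<^sup>2"]
      proof eventually_elim
        case (elim n)
        have N0: "(2::real)^n > 0" by simp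
        have Nm4: "2^n * m2 \<ge> 4" using elim(2) by (simp add: divide_less_eq mult.commute)
        show ?case
        proof (intro ballI allI impI)
          fix s :: real and k :: nat assume s: "s \<in> {1,-1}" and k: "k \<le> nat \<lfloor>2^n*A\<rfloor>"
          have trm: "\<bar>1 / 2 * (1 / (a n s i - 1)) - s * (G (s * real i / 2^n) - G (s * (real i - 1) / 2^n))\<bar>
              \<le> 2 * (2^n * (2 * Bd * \<eta>) + 2) / (2^n * 2^n * (m2 * m2))"
            if i: "i \<in> {1..k}" for i
          proof -
            have iK: "i \<in> {1..K n}" using i k unfolding K_def by auto
            obtain \<xi> where \<xi>: "\<xi> \<in> {-A..A}" "\<bar>\<xi> - s * (real i - 1) / 2^n\<bar> \<le> 1 / 2^n"
                "\<bar>\<xi> - s * real i / 2^n\<bar> \<le> 1 / 2^n"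
                "s * (G (s * real i / 2^n) - G (s * (real i - 1) / 2^n)) = 1 / L0 \<xi> ^ 2 / 2^n"
              using mvt_rng[OF D s iK] by blast
            have r: "s * (real i - 1) / 2^n \<in> {-A..A}" "s * real i / 2^n \<in> {-A..A}" using rng[OF s iK] by auto
            have e1: "\<bar>L0 (s * (real i - 1) / 2^n) - L0 \<xi>\<bar> \<le> \<eta>"
              using \<delta> r(1) \<xi>(1,2) elim(1) by (smt (verit, best))
            have e2: "\<bar>L0 (s * real i / 2^n) - L0 \<xi>\<bar> \<le> \<eta>"
              using \<delta> r(2) \<xi>(1,3) elim(1) by (smt (verit, best))
            let ?P = "L0 (s * (real i - 1) / 2^n) * L0 (s * real i / 2^n)"
            let ?R = "L0 \<xi> * L0 \<xi>"
            have bp: "\<bar>?P - ?R\<bar> \<le> 2 * Bd * \<eta>"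
              by (rule bias_prod) (use pos mB r \<xi>(1) e1 e2 in auto)
            have Pm: "?P \<ge> m2" unfolding m2_def using mB r m pos by (intro mult_mono) (auto intro: less_imp_le)
            have Rm: "?R \<ge> m2" unfolding m2_def using mB \<xi>(1) m pos by (intro mult_mono) (auto intro: less_imp_le)
            have bi: "\<bar>1 / (2^n * ?P - 2) - 1 / (2^n * ?R)\<bar> \<le> 2 * (2^n * (2 * Bd * \<eta>) + 2) / (2^n * 2^n * (m2 * m2))"
              by (rule bias_inv[OF N0 Pm Rm m20 Nm4]) (use bp in \<open>simp add: abs_minus_commute\<close>)
            have q1: "1 / 2 * (1 / (a n s i - 1)) = 1 / (2^n * ?P - 2)"
            proof -
              have "2 * (a n s i - 1) = 2^n * ?P - 2" unfolding a_def by (simp add: algebra_simps)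
              then show ?thesis by (metis divide_divide_eq_left mult.commute times_divide_eq_right mult_1)
            qed
            have q2: "1 / L0 \<xi> ^ 2 / 2^n = 1 / (2^n * ?R)" by (simp add: power2_eq_square)
            show ?thesis using bi unfolding q1 \<xi>(4) q2 .
          qed
          have "(\<Sum>i=1..k. \<bar>1 / 2 * (1 / (a n s i - 1)) - s * (G (s * real i / 2^n) - G (s * (real i - 1) / 2^n))\<bar>)
              \<le> (\<Sum>i=1..k. 2 * (2^n * (2 * Bd * \<eta>) + 2) / (2^n * 2^n * (m2 * m2)))" by (rule sum_mono) (rule trm)
          also have "\<dots> = real k * (2 * (2^n * (2 * Bd * \<eta>) + 2) / (2^n * 2^n * (m2 * m2)))" by simp
          also have "\<dots> \<le> (2^n * A) * (2 * (2^n * (2 * Bd * \<eta>) + 2) / (2^n * 2^n * (m2 * m2)))"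
          proof (rule mult_right_mono)
            have "real k \<le> real (K n)" using k unfolding K_def by simp
            then show "real k \<le> 2^n * A" using Kb[of n] by linarith
            show "0 \<le> 2 * (2^n * (2 * Bd * \<eta>) + 2) / (2^n * 2^n * (m2 * m2))" using Bd0 \<eta>0 by simp
          qed
          also have "\<dots> = \<epsilon> / 2 + 4 * A / m2\<^sup>2 / 2^n"
            unfolding \<eta>_def using Apos Bd0 m20 by (simp add: field_simps power2_eq_square)
          also have "\<dots> \<le> \<epsilon>" using elim(3) by simp
          finally show "(\<Sum>i=1..k. \<bar>1 / 2 * (1 / (a n s i - 1)) - s * (G (s * real i / 2^n) - G (s * (real i - 1) / 2^n))\<bar>) \<le> \<epsilon>" .
        qed
      qed
    qed
  qed
qed

end

theorem mainTheorem12: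
  fixes M :: "'a measure" and L0 :: "real \<Rightarrow> real"
    and \<gamma> :: "nat \<Rightarrow> real set \<Rightarrow> 'a \<Rightarrow> real" and A :: real
  assumes "prob_space M"
    and "standing_L0 L0"
    and indep: "\<And>n. prob_space.indep_vars M (\<lambda>_. borel) (\<gamma> n) (dyadic_edges n)"
    and distr: "\<And>n x. x \<in> dyadic n \<Longrightarrow>
       distributed M lborel (\<gamma> n {x - 1 / 2 ^ n, x})
         (\<lambda>t. ennreal (gamma_density (2 ^ n / 2 * L0 (x - 1 / 2 ^ n) * L0 x) t))"
    and "A > 0"
  shows "tendsto_in_prob_zero M (\<lambda>n \<omega>. SUP x\<in>{-A..A} \<inter> dyadic n.
            \<bar>sgn x * (1 / 2) * (\<Sum>i = 1..nat \<lfloor>2 ^ n * \<bar>x\<bar>\<rfloor>.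
                 1 / \<gamma> n {sgn x * (real i - 1) / 2 ^ n, sgn x * real i / 2 ^ n} \<omega>)
             - (LBINT r=0..x. 1 / L0 r ^ 2)\<bar>)
       \<and> tendsto_in_prob_zero M (\<lambda>n \<omega>. SUP x\<in>{-A..A} \<inter> dyadic n.
            \<bar>sgn x * 2 / 4 ^ n * (\<Sum>i = 1..nat \<lfloor>2 ^ n * \<bar>x\<bar>\<rfloor>.
                 \<gamma> n {sgn x * (real i - 1) / 2 ^ n, sgn x * real i / 2 ^ n} \<omega>)
             - (LBINT r=0..x. L0 r ^ 2)\<bar>)"
proof -
  from assms(2) have cont: "continuous_on UNIV L0" and pos: "\<And>x. L0 x > 0"
    unfolding standing_L0_def by auto
  interpret dm: dyad_model M L0 \<gamma> A
    using assms(1) cont pos indep distr assms(5) by (simp add: dyad_model_def dyad_model_axioms_def)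
  have ne: "\<And>x. L0 x \<noteq> 0" using pos by (metis less_irrefl)
  have c1: "continuous_on UNIV (\<lambda>r. 1 / L0 r ^ 2)"
    using cont ne by (intro continuous_intros) auto
  have c2: "continuous_on UNIV (\<lambda>r. L0 r ^ 2)"
    using cont by (intro continuous_intros) auto
  obtain G1 where G1: "\<And>x. (G1 has_real_derivative 1 / L0 x ^ 2) (at x)"
      "\<And>x. (LBINT r=0..x. 1 / L0 r ^ 2) = G1 x - G1 0"
    using prim[OF c1] by blast
  obtain G2 where G2: "\<And>x. (G2 has_real_derivative L0 x ^ 2) (at x)"
      "\<And>x. (LBINT r=0..x. L0 r ^ 2) = G2 x - G2 0"
    using prim[OF c2] by blast
  note q1 = dm.Q1[OF G1]
  note q2 = dm.Q2[OF G2]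
  have eq1: "sgn x * (1 / 2) * (\<Sum>i = 1..k. 1 / \<gamma> n {sgn x * (real i - 1) / 2 ^ n, sgn x * real i / 2 ^ n} \<omega>)
      = sgn x * (\<Sum>i = 1..k. 1 / 2 * (1 / \<gamma> n (dm.E n (sgn x) i) \<omega>))" for x k n \<omega>
    unfolding dm.E_def by (simp add: sum_distrib_left)
  have eq2: "sgn x * 2 / 4 ^ n * (\<Sum>i = 1..k. \<gamma> n {sgn x * (real i - 1) / 2 ^ n, sgn x * real i / 2 ^ n} \<omega>)
      = sgn x * (\<Sum>i = 1..k. 2 / 4 ^ n * \<gamma> n (dm.E n (sgn x) i) \<omega>)" for x k n \<omega>
    unfolding dm.E_def by (simp add: sum_distrib_left mult.assoc)
  show ?thesis unfolding eq1 eq2 using q1 q2 by blast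
qed


end
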